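(* Let $n\ge 2$. For $k\ge 1$ let $E_k$ be the $k\times k$ identity matrix (and $E_0$ the empty matrix). Define integer matrices $X_m$ of size $\frac{m(m-1)}{2}\times m$ for $m\ge 2$ inductively by $X_2=\begin{pmatrix}1&-1\end{pmatrix}$ and, for $m>2$, $X_m=\begin{pmatrix}\mathbf{1}& -E_{m-1}\\ \mathbf{0} & X_{m-1}\end{pmatrix}$, where $\mathbf{1}$ is the all-ones column vector of length $m-1$ and $\mathbf{0}$ is the zero column vector of length $\frac{(m-1)(m-2)}{2}$. Let \[ A_n=\begin{pmatrix}-E_n & -{}^tX_n\\ -X_n & -nE_{n(n-1)/2}\end{pmatrix}, \] a square integer matrix of size $n+\frac{n(n-1)}{2}$. Then the Smith normal form of $A_n$ over $\mathbb{Z}$ is \[ E_{2n-2}\oplus nE_{(n-2)(n-3)/2}\oplus O, \] where $O$ is the zero matrix (necessarily square of size $n-1$).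
   Context: ${}^tM$ denotes the transpose of $M$, and $D_1\oplus D_2\oplus D_3$ denotes the block-diagonal matrix with diagonal blocks $D_1,D_2,D_3$. (The matrix $A_n$ is the weighted incidence matrix of the plumbing graph obtained from the complete graph on $n$ vertices by giving each original vertex weight $-1$, inserting a vertex of weight $-n$ on each edge, with the two resulting half-edges signed $-$ and $+$.) *)

theory Defs
  imports "Jordan_Normal_Form.Matrix"
begin

definition in_smith_form :: "int mat \<Rightarrow> bool" where
  "in_smith_form D \<longleftrightarrow>
     (\<forall>i < dim_row D. \<forall>j < dim_col D. i \<noteq> j \<longrightarrow> D $$ (i, j) = 0) \<and>
     (\<forall>i < min (dim_row D) (dim_col D). D $$ (i, i) \<ge> 0) \<and>
     (\<forall>i. Suc i < min (dim_row D) (dim_col D) \<longrightarrow> D $$ (i, i) dvd D $$ (Suc i, Suc i))"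

definition is_smith_normal_form_of :: "int mat \<Rightarrow> int mat \<Rightarrow> bool" where
  "is_smith_normal_form_of A D \<longleftrightarrow>
     dim_row D = dim_row A \<and> dim_col D = dim_col A \<and> in_smith_form D \<and>
     (\<exists>P Q. P \<in> carrier_mat (dim_row A) (dim_row A) \<and>
            Q \<in> carrier_mat (dim_col A) (dim_col A) \<and>
            invertible_mat P \<and> invertible_mat Q \<and> P * A * Q = D)"

text \<open>X_aux k is the matrix X_(k+2) of the paper.\<close>
primrec X_aux :: "nat \<Rightarrow> int mat" where
  "X_aux 0 = mat 1 2 (\<lambda>(i, j). if j = 0 then 1 else -1)"
| "X_aux (Suc k) =
     four_block_mat (mat (k + 2) 1 (\<lambda>_. 1)) (- (1\<^sub>m (k + 2)))
                    (0\<^sub>m ((k + 2) * (k + 1) div 2) 1) (X_aux k)"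

definition X_mat :: "nat \<Rightarrow> int mat" where
  "X_mat m = X_aux (m - 2)"

definition A_mat :: "nat \<Rightarrow> int mat" where
  "A_mat n = four_block_mat (- (1\<^sub>m n)) (- transpose_mat (X_mat n))
                            (- X_mat n) (- (int n \<cdot>\<^sub>m 1\<^sub>m (n * (n - 1) div 2)))"

definition snf_target :: "nat \<Rightarrow> int mat" where
  "snf_target n = mat (n + n * (n - 1) div 2) (n + n * (n - 1) div 2)
     (\<lambda>(i, j). if i = j then
                 (if i < 2 * n - 2 then 1
                  else if i < 2 * n - 2 + (n - 2) * (n - 3) div 2 then int n
                  else 0)
               else 0)"

end

theory Submission
  imports Defs "Jordan_Normal_Form.Determinant"
begin


lemma mult_entry:
  assumes "A \<in> carrier_mat r c" "B \<in> carrier_mat c s" "i < r" "j < s"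
  shows "(A * B) $$ (i,j) = (\<Sum>l<c. A $$ (i,l) * B $$ (l,j))"
  using assms by (simp add: scalar_prod_def atLeast0LessThan)

lemma sum_delta_l: "(a::nat) < c \<Longrightarrow> (\<Sum>l<c. (if l = a then x else 0) * (g l :: int)) = x * g a"
proof -
  assume a: "a < c"
  have "(\<Sum>l<c. (if l = a then x else 0) * (g l :: int)) = (\<Sum>l<c. if l = a then x * g l else 0)"
    by (rule sum.cong) auto
  also have "\<dots> = x * g a" using a by (simp add: sum.delta')
  finally show ?thesis .
qed

lemma sum_delta_r: "(a::nat) < c \<Longrightarrow> (\<Sum>l<c. (g l :: int) * (if l = a then x else 0)) = g a * x"
proof -
  assume a: "a < c"
  have "(\<Sum>l<c. (g l :: int) * (if l = a then x else 0)) = (\<Sum>l<c. if l = a then g l * x else 0)"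
    by (rule sum.cong) auto
  also have "\<dots> = g a * x" using a by (simp add: sum.delta')
  finally show ?thesis .
qed

lemma mult_row3:
  fixes A B :: "int mat"
  assumes A: "A \<in> carrier_mat r c" and B: "B \<in> carrier_mat c s" and ij: "i < r" "j < s"
    and abd: "a < c" "b < c" "d < c"
    and row: "\<And>l. l < c \<Longrightarrow> A $$ (i,l) = (if l = a then x else 0) + (if l = b then y else 0) + (if l = d then z else 0)"
  shows "(A * B) $$ (i,j) = x * B $$ (a,j) + y * B $$ (b,j) + z * B $$ (d,j)"
proof -
  have "(A * B) $$ (i,j) = (\<Sum>l<c. ((if l = a then x else 0) + (if l = b then y else 0) + (if l = d then z else 0)) * B $$ (l,j))"
    unfolding mult_entry[OF A B ij] by (rule sum.cong, simp_all add: row)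
  also have "\<dots> = (\<Sum>l<c. (if l = a then x else 0) * B $$ (l,j)) + (\<Sum>l<c. (if l = b then y else 0) * B $$ (l,j))
     + (\<Sum>l<c. (if l = d then z else 0) * B $$ (l,j))"
    by (simp add: distrib_right sum.distrib)
  also have "\<dots> = x * B $$ (a,j) + y * B $$ (b,j) + z * B $$ (d,j)"
    by (simp only: sum_delta_l[OF abd(1)] sum_delta_l[OF abd(2)] sum_delta_l[OF abd(3)])
  finally show ?thesis .
qed

lemma mult_row0:
  fixes A B :: "int mat"
  assumes A: "A \<in> carrier_mat r c" and B: "B \<in> carrier_mat c s" and ij: "i < r" "j < s"
    and row: "\<And>l. l < c \<Longrightarrow> A $$ (i,l) = (0::int)"
  shows "(A * B) $$ (i,j) = 0"
  unfolding mult_entry[OF A B ij] by (simp add: row)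

lemma mult_col1:
  fixes A B :: "int mat"
  assumes A: "A \<in> carrier_mat r c" and B: "B \<in> carrier_mat c s" and ij: "i < r" "j < s"
    and a: "a < c"
    and col: "\<And>l. l < c \<Longrightarrow> B $$ (l,j) = (if l = a then x else 0)"
  shows "(A * B) $$ (i,j) = A $$ (i,a) * (x::int)"
proof -
  have "(A * B) $$ (i,j) = (\<Sum>l<c. A $$ (i,l) * (if l = a then x else 0))"
    unfolding mult_entry[OF A B ij] by (rule sum.cong, simp_all add: col)
  also have "\<dots> = A $$ (i,a) * x" using a by (rule sum_delta_r)
  finally show ?thesis .
qed

lemma sum_lessThan_add: "(\<Sum>i<(a::nat)+b. f i) = (\<Sum>i<a. f i) + (\<Sum>i<b. f (a+i))"
  by (induct b) (auto simp: add.assoc)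

definition eqv :: "int mat \<Rightarrow> int mat \<Rightarrow> bool" where
  "eqv A B \<longleftrightarrow> (\<exists>P Q. P \<in> carrier_mat (dim_row A) (dim_row A) \<and> Q \<in> carrier_mat (dim_col A) (dim_col A) \<and>
     invertible_mat P \<and> invertible_mat Q \<and> P * A * Q = B)"

lemma invertible_I:
  assumes "P \<in> carrier_mat n n" "Q \<in> carrier_mat n n" "P * Q = 1\<^sub>m n" "Q * P = 1\<^sub>m n"
  shows "invertible_mat (P :: int mat)"
  using assms unfolding invertible_mat_def inverts_mat_def square_mat.simps
  by (metis carrier_matD)

lemma invertible_det:
  assumes P: "P \<in> carrier_mat n n" and d: "det P = 1 \<or> det P = -1"
  shows "invertible_mat (P :: int mat)"
proof -
  have "\<exists>u :: int. u * det P = 1"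
  proof (cases "det P = 1")
    case True then show ?thesis by (intro exI[of _ 1]) simp
  next
    case False then have "det P = -1" using d by simp
    then show ?thesis by (intro exI[of _ "-1"]) simp
  qed
  then obtain u :: int where u: "u * det P = 1" by blast
  show ?thesis
  proof (rule invertible_I[OF P, of "u \<cdot>\<^sub>m adj_mat P"])
    show "u \<cdot>\<^sub>m adj_mat P \<in> carrier_mat n n" using adj_mat(1)[OF P] by simp
    have "P * (u \<cdot>\<^sub>m adj_mat P) = u \<cdot>\<^sub>m (P * adj_mat P)" by (rule mult_smult_distrib[OF P adj_mat(1)[OF P]])
    also have "\<dots> = 1\<^sub>m n" unfolding adj_mat(2)[OF P] by (rule eq_matI, insert u, auto simp: mult.assoc[symmetric])
    finally show "P * (u \<cdot>\<^sub>m adj_mat P) = 1\<^sub>m n" .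
    have "(u \<cdot>\<^sub>m adj_mat P) * P = u \<cdot>\<^sub>m (adj_mat P * P)" by (rule mult_smult_assoc_mat[OF adj_mat(1)[OF P] P])
    also have "\<dots> = 1\<^sub>m n" unfolding adj_mat(3)[OF P] by (rule eq_matI, insert u, auto simp: mult.assoc[symmetric])
    finally show "(u \<cdot>\<^sub>m adj_mat P) * P = 1\<^sub>m n" .
  qed
qed

lemma invertible_one: "invertible_mat (1\<^sub>m n :: int mat)"
  by (rule invertible_I[of _ n "1\<^sub>m n"]) auto

lemma inv_ex:
  assumes P: "P \<in> carrier_mat n n" and iP: "invertible_mat (P :: int mat)"
  shows "\<exists>P'. P' \<in> carrier_mat n n \<and> P * P' = 1\<^sub>m n \<and> P' * P = 1\<^sub>m n"
proof -
  from iP obtain B where B: "P * B = 1\<^sub>m (dim_row P)" "B * P = 1\<^sub>m (dim_row B)"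
    unfolding invertible_mat_def inverts_mat_def by auto
  have "dim_col B = n" using B(1) P by (metis carrier_matD(1) index_mult_mat(3) index_one_mat(3))
  moreover have "dim_row B = n" using B(2) P by (metis carrier_matD(2) index_mult_mat(3) index_one_mat(3))
  ultimately show ?thesis using B P by (intro exI[of _ B]) auto
qed

lemma invertible_mult:
  assumes P: "P \<in> carrier_mat n n" and Q: "Q \<in> carrier_mat n n" and iP: "invertible_mat P" and iQ: "invertible_mat (Q :: int mat)"
  shows "invertible_mat (P * Q)"
proof -
  from inv_ex[OF P iP] obtain P' where P'c: "P' \<in> carrier_mat n n" and P': "P * P' = 1\<^sub>m n" "P' * P = 1\<^sub>m n"
    by auto
  from inv_ex[OF Q iQ] obtain Q' where Q'c: "Q' \<in> carrier_mat n n" and Q': "Q * Q' = 1\<^sub>m n" "Q' * Q = 1\<^sub>m n"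
    by auto
  show ?thesis
  proof (rule invertible_I[of _ n "Q' * P'"])
    have "P * Q * (Q' * P') = P * (Q * (Q' * P'))" using assoc_mult_mat[OF P Q mult_carrier_mat[OF Q'c P'c]] .
    also have "Q * (Q' * P') = (Q * Q') * P'" using assoc_mult_mat[OF Q Q'c P'c] by (rule sym)
    also have "(Q * Q') * P' = P'" using Q'(1) P'c by simp
    finally show "P * Q * (Q' * P') = 1\<^sub>m n" using P'(1) by simp
    have "Q' * P' * (P * Q) = Q' * (P' * (P * Q))" using assoc_mult_mat[OF Q'c P'c mult_carrier_mat[OF P Q]] .
    also have "P' * (P * Q) = (P' * P) * Q" using assoc_mult_mat[OF P'c P Q] by (rule sym)
    also have "(P' * P) * Q = Q" using P'(2) Q by simp
    finally show "Q' * P' * (P * Q) = 1\<^sub>m n" using Q'(2) by simp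
  qed (use P Q P'c Q'c in auto)
qed

lemma eqv_refl: "eqv A A"
  unfolding eqv_def by (rule exI[of _ "1\<^sub>m (dim_row A)"], rule exI[of _ "1\<^sub>m (dim_col A)"])
   (auto simp: invertible_one)

lemma eqv_I:
  assumes "A \<in> carrier_mat r c" "P \<in> carrier_mat r r" "Q \<in> carrier_mat c c" "invertible_mat P" "invertible_mat Q"
    "P * A * Q = B"
  shows "eqv A B"
proof -
  have "dim_row A = r" "dim_col A = c" using assms(1) by auto
  then show ?thesis unfolding eqv_def using assms(2-6) by blast
qed

lemma eqv_dims: "eqv A B \<Longrightarrow> dim_row B = dim_row A \<and> dim_col B = dim_col A"
  unfolding eqv_def by auto

lemma eqv_trans:
  assumes "eqv A B" "eqv B C" shows "eqv A C"
proof -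
  obtain P Q where PQ: "P \<in> carrier_mat (dim_row A) (dim_row A)" "Q \<in> carrier_mat (dim_col A) (dim_col A)"
     "invertible_mat P" "invertible_mat Q" "P * A * Q = B" using assms(1) unfolding eqv_def by auto
  have d: "dim_row B = dim_row A" "dim_col B = dim_col A" using eqv_dims[OF assms(1)] by auto
  obtain P' Q' where PQ': "P' \<in> carrier_mat (dim_row A) (dim_row A)" "Q' \<in> carrier_mat (dim_col A) (dim_col A)"
     "invertible_mat P'" "invertible_mat Q'" "P' * B * Q' = C" using assms(2) d unfolding eqv_def by auto
  have A: "A \<in> carrier_mat (dim_row A) (dim_col A)" by auto
  let ?r = "dim_row A" and ?c = "dim_col A"
  have cP: "P \<in> carrier_mat ?r ?r" and cQ: "Q \<in> carrier_mat ?c ?c"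
    and cP': "P' \<in> carrier_mat ?r ?r" and cQ': "Q' \<in> carrier_mat ?c ?c" using PQ PQ' by auto
  have cPA: "P * A \<in> carrier_mat ?r ?c" using cP A by (rule mult_carrier_mat)
  have cPPA: "P' * P * A \<in> carrier_mat ?r ?c" using mult_carrier_mat[OF mult_carrier_mat[OF cP' cP] A] .
  have 1: "P' * P * A * (Q * Q') = P' * P * A * Q * Q'"
    using assoc_mult_mat[OF cPPA cQ cQ'] by (rule sym)
  have 2: "P' * P * A = P' * (P * A)" by (rule assoc_mult_mat[OF cP' cP A])
  have 3: "P' * (P * A) * Q = P' * (P * A * Q)" by (rule assoc_mult_mat[OF cP' cPA cQ])
  have "P' * P * A * (Q * Q') = P' * (P * A * Q) * Q'" unfolding 1 unfolding 2 unfolding 3 ..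
  then have eq: "P' * P * A * (Q * Q') = C" using PQ(5) PQ'(5) by simp
  have i1: "invertible_mat (P' * P)" by (rule invertible_mult[OF PQ'(1) PQ(1) PQ'(3) PQ(3)])
  have i2: "invertible_mat (Q * Q')" by (rule invertible_mult[OF PQ(2) PQ'(2) PQ(4) PQ'(4)])
  have c1: "P' * P \<in> carrier_mat ?r ?r" using PQ(1) PQ'(1) by simp
  have c2: "Q * Q' \<in> carrier_mat ?c ?c" using PQ(2) PQ'(2) by simp
  show ?thesis by (rule eqv_I[OF A c1 c2 i1 i2 eq])
qed


lemma eqv_eq: "A = B \<Longrightarrow> eqv A B" using eqv_refl by simp

lemma invertible_lower:
  assumes Y: "Y \<in> carrier_mat r2 r1"
  shows "invertible_mat (four_block_mat (1\<^sub>m r1) (0\<^sub>m r1 r2) Y (1\<^sub>m r2) :: int mat)"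
  by (rule invertible_det[of _ "r1 + r2"], insert Y, auto simp: det_four_block_mat_upper_right_zero[of _ r1 _ r2])

lemma invertible_upper:
  assumes Y: "Y \<in> carrier_mat r1 r2"
  shows "invertible_mat (four_block_mat (1\<^sub>m r1) Y (0\<^sub>m r2 r1) (1\<^sub>m r2) :: int mat)"
  by (rule invertible_det[of _ "r1 + r2"], insert Y, auto simp: det_four_block_mat_lower_left_zero[of _ r1 _ r2])

lemma rowop_lower:
  fixes A B C D Y :: "int mat"
  assumes A: "A \<in> carrier_mat r1 c1" and B: "B \<in> carrier_mat r1 c2"
    and C: "C \<in> carrier_mat r2 c1" and D: "D \<in> carrier_mat r2 c2" and Y: "Y \<in> carrier_mat r2 r1"
  shows "eqv (four_block_mat A B C D) (four_block_mat A B (C + Y * A) (D + Y * B))"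
proof (rule eqv_I[of _ "r1 + r2" "c1 + c2"])
  show "four_block_mat A B C D \<in> carrier_mat (r1 + r2) (c1 + c2)" using A D by simp
  show "four_block_mat (1\<^sub>m r1) (0\<^sub>m r1 r2) Y (1\<^sub>m r2) \<in> carrier_mat (r1 + r2) (r1 + r2)" using Y by simp
  show "invertible_mat (four_block_mat (1\<^sub>m r1) (0\<^sub>m r1 r2) Y (1\<^sub>m r2))" using invertible_lower[OF Y] .
  show "1\<^sub>m (c1 + c2) \<in> carrier_mat (c1 + c2) (c1 + c2)" by simp
  show "invertible_mat (1\<^sub>m (c1 + c2) :: int mat)" by (rule invertible_one)
  have "four_block_mat (1\<^sub>m r1) (0\<^sub>m r1 r2) Y (1\<^sub>m r2) * four_block_mat A B C D
    = four_block_mat (1\<^sub>m r1 * A + 0\<^sub>m r1 r2 * C) (1\<^sub>m r1 * B + 0\<^sub>m r1 r2 * D) (Y * A + 1\<^sub>m r2 * C) (Y * B + 1\<^sub>m r2 * D)"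
    by (rule mult_four_block_mat[OF one_carrier_mat zero_carrier_mat Y one_carrier_mat A B C D])
  also have "\<dots> = four_block_mat A B (C + Y * A) (D + Y * B)"
    using A B C D Y by (intro cong_four_block_mat) (auto simp: comm_add_mat[of _ r2])
  finally show "four_block_mat (1\<^sub>m r1) (0\<^sub>m r1 r2) Y (1\<^sub>m r2) * four_block_mat A B C D * 1\<^sub>m (c1 + c2) =
    four_block_mat A B (C + Y * A) (D + Y * B)" using A B C D Y by simp
qed

lemma rowop_upper:
  fixes A B C D Y :: "int mat"
  assumes A: "A \<in> carrier_mat r1 c1" and B: "B \<in> carrier_mat r1 c2"
    and C: "C \<in> carrier_mat r2 c1" and D: "D \<in> carrier_mat r2 c2" and Y: "Y \<in> carrier_mat r1 r2"
  shows "eqv (four_block_mat A B C D) (four_block_mat (A + Y * C) (B + Y * D) C D)"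
proof (rule eqv_I[of _ "r1 + r2" "c1 + c2"])
  show "four_block_mat A B C D \<in> carrier_mat (r1 + r2) (c1 + c2)" using A D by simp
  show "four_block_mat (1\<^sub>m r1) Y (0\<^sub>m r2 r1) (1\<^sub>m r2) \<in> carrier_mat (r1 + r2) (r1 + r2)" using Y by simp
  show "invertible_mat (four_block_mat (1\<^sub>m r1) Y (0\<^sub>m r2 r1) (1\<^sub>m r2))" using invertible_upper[OF Y] .
  show "1\<^sub>m (c1 + c2) \<in> carrier_mat (c1 + c2) (c1 + c2)" by simp
  show "invertible_mat (1\<^sub>m (c1 + c2) :: int mat)" by (rule invertible_one)
  have "four_block_mat (1\<^sub>m r1) Y (0\<^sub>m r2 r1) (1\<^sub>m r2) * four_block_mat A B C D
    = four_block_mat (1\<^sub>m r1 * A + Y * C) (1\<^sub>m r1 * B + Y * D) (0\<^sub>m r2 r1 * A + 1\<^sub>m r2 * C) (0\<^sub>m r2 r1 * B + 1\<^sub>m r2 * D)"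
    by (rule mult_four_block_mat[OF one_carrier_mat Y zero_carrier_mat one_carrier_mat A B C D])
  also have "\<dots> = four_block_mat (A + Y * C) (B + Y * D) C D"
    using A B C D Y by (intro cong_four_block_mat) auto
  finally show "four_block_mat (1\<^sub>m r1) Y (0\<^sub>m r2 r1) (1\<^sub>m r2) * four_block_mat A B C D * 1\<^sub>m (c1 + c2) =
    four_block_mat (A + Y * C) (B + Y * D) C D" using A B C D Y by simp
qed

lemma colop_right:
  fixes A B C D Y :: "int mat"
  assumes A: "A \<in> carrier_mat r1 c1" and B: "B \<in> carrier_mat r1 c2"
    and C: "C \<in> carrier_mat r2 c1" and D: "D \<in> carrier_mat r2 c2" and Y: "Y \<in> carrier_mat c1 c2"
  shows "eqv (four_block_mat A B C D) (four_block_mat A (B + A * Y) C (D + C * Y))"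
proof (rule eqv_I[of _ "r1 + r2" "c1 + c2" "1\<^sub>m (r1 + r2)" "four_block_mat (1\<^sub>m c1) Y (0\<^sub>m c2 c1) (1\<^sub>m c2)"])
  show "four_block_mat A B C D \<in> carrier_mat (r1 + r2) (c1 + c2)" using A D by simp
  show "four_block_mat (1\<^sub>m c1) Y (0\<^sub>m c2 c1) (1\<^sub>m c2) \<in> carrier_mat (c1 + c2) (c1 + c2)" using Y by simp
  show "invertible_mat (four_block_mat (1\<^sub>m c1) Y (0\<^sub>m c2 c1) (1\<^sub>m c2))" using invertible_upper[OF Y] .
  show "1\<^sub>m (r1 + r2) \<in> carrier_mat (r1 + r2) (r1 + r2)" by simp
  show "invertible_mat (1\<^sub>m (r1 + r2) :: int mat)" by (rule invertible_one)
  have "four_block_mat A B C D * four_block_mat (1\<^sub>m c1) Y (0\<^sub>m c2 c1) (1\<^sub>m c2)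
    = four_block_mat (A * 1\<^sub>m c1 + B * 0\<^sub>m c2 c1) (A * Y + B * 1\<^sub>m c2) (C * 1\<^sub>m c1 + D * 0\<^sub>m c2 c1) (C * Y + D * 1\<^sub>m c2)"
    by (rule mult_four_block_mat[OF A B C D one_carrier_mat Y zero_carrier_mat one_carrier_mat])
  also have "\<dots> = four_block_mat A (B + A * Y) C (D + C * Y)"
    using A B C D Y by (intro cong_four_block_mat) (auto simp: comm_add_mat[of _ r1 c2] comm_add_mat[of _ r2 c2])
  finally show "1\<^sub>m (r1 + r2) * four_block_mat A B C D * four_block_mat (1\<^sub>m c1) Y (0\<^sub>m c2 c1) (1\<^sub>m c2) =
    four_block_mat A (B + A * Y) C (D + C * Y)" using A B C D Y by simp
qed

lemma colop_left:
  fixes A B C D Y :: "int mat"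
  assumes A: "A \<in> carrier_mat r1 c1" and B: "B \<in> carrier_mat r1 c2"
    and C: "C \<in> carrier_mat r2 c1" and D: "D \<in> carrier_mat r2 c2" and Y: "Y \<in> carrier_mat c2 c1"
  shows "eqv (four_block_mat A B C D) (four_block_mat (A + B * Y) B (C + D * Y) D)"
proof (rule eqv_I[of _ "r1 + r2" "c1 + c2" "1\<^sub>m (r1 + r2)" "four_block_mat (1\<^sub>m c1) (0\<^sub>m c1 c2) Y (1\<^sub>m c2)"])
  show "four_block_mat A B C D \<in> carrier_mat (r1 + r2) (c1 + c2)" using A D by simp
  show "four_block_mat (1\<^sub>m c1) (0\<^sub>m c1 c2) Y (1\<^sub>m c2) \<in> carrier_mat (c1 + c2) (c1 + c2)" using Y by simp
  show "invertible_mat (four_block_mat (1\<^sub>m c1) (0\<^sub>m c1 c2) Y (1\<^sub>m c2))" using invertible_lower[OF Y] .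
  show "1\<^sub>m (r1 + r2) \<in> carrier_mat (r1 + r2) (r1 + r2)" by simp
  show "invertible_mat (1\<^sub>m (r1 + r2) :: int mat)" by (rule invertible_one)
  have "four_block_mat A B C D * four_block_mat (1\<^sub>m c1) (0\<^sub>m c1 c2) Y (1\<^sub>m c2)
    = four_block_mat (A * 1\<^sub>m c1 + B * Y) (A * 0\<^sub>m c1 c2 + B * 1\<^sub>m c2) (C * 1\<^sub>m c1 + D * Y) (C * 0\<^sub>m c1 c2 + D * 1\<^sub>m c2)"
    by (rule mult_four_block_mat[OF A B C D one_carrier_mat zero_carrier_mat Y one_carrier_mat])
  also have "\<dots> = four_block_mat (A + B * Y) B (C + D * Y) D"
    using A B C D Y by (intro cong_four_block_mat) auto
  finally show "1\<^sub>m (r1 + r2) * four_block_mat A B C D * four_block_mat (1\<^sub>m c1) (0\<^sub>m c1 c2) Y (1\<^sub>m c2) =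
    four_block_mat (A + B * Y) B (C + D * Y) D" using A B C D Y by simp
qed

lemma eqv_diag:
  assumes e1: "eqv A A'" and e2: "eqv D D'"
    and A: "A \<in> carrier_mat r1 c1" and D: "D \<in> carrier_mat r2 c2"
  shows "eqv (four_block_mat A (0\<^sub>m r1 c2) (0\<^sub>m r2 c1) D) (four_block_mat A' (0\<^sub>m r1 c2) (0\<^sub>m r2 c1) D')"
proof -
  obtain P1 Q1 where 1: "P1 \<in> carrier_mat r1 r1" "Q1 \<in> carrier_mat c1 c1" "invertible_mat P1" "invertible_mat Q1"
    "P1 * A * Q1 = A'" using e1 A unfolding eqv_def by auto
  obtain P2 Q2 where 2: "P2 \<in> carrier_mat r2 r2" "Q2 \<in> carrier_mat c2 c2" "invertible_mat P2" "invertible_mat Q2"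
    "P2 * D * Q2 = D'" using e2 D unfolding eqv_def by auto
  have dg: "invertible_mat (four_block_mat P (0\<^sub>m n m) (0\<^sub>m m n) P' :: int mat)"
    if P: "P \<in> carrier_mat n n" "invertible_mat P" and P': "P' \<in> carrier_mat m m" "invertible_mat P'" for P P' n m
  proof -
    obtain R where R: "R \<in> carrier_mat n n" "P * R = 1\<^sub>m n" "R * P = 1\<^sub>m n" using inv_ex[OF P(1) P(2)] by auto
    obtain R' where R': "R' \<in> carrier_mat m m" "P' * R' = 1\<^sub>m m" "R' * P' = 1\<^sub>m m" using inv_ex[OF P'(1) P'(2)] by auto
    show ?thesis
    proof (rule invertible_I[of _ "n + m" "four_block_mat R (0\<^sub>m n m) (0\<^sub>m m n) R'"])
      show "four_block_mat P (0\<^sub>m n m) (0\<^sub>m m n) P' * four_block_mat R (0\<^sub>m n m) (0\<^sub>m m n) R' = 1\<^sub>m (n + m)"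
        by (subst mult_four_block_mat[OF P(1) zero_carrier_mat zero_carrier_mat P'(1) R(1) zero_carrier_mat zero_carrier_mat R'(1)], insert P P' R R', auto)
      show "four_block_mat R (0\<^sub>m n m) (0\<^sub>m m n) R' * four_block_mat P (0\<^sub>m n m) (0\<^sub>m m n) P' = 1\<^sub>m (n + m)"
        by (subst mult_four_block_mat[OF R(1) zero_carrier_mat zero_carrier_mat R'(1) P(1) zero_carrier_mat zero_carrier_mat P'(1)], insert P P' R R', auto)
    qed (insert P P' R R', auto)
  qed
  show ?thesis
  proof (rule eqv_I[of _ "r1 + r2" "c1 + c2" "four_block_mat P1 (0\<^sub>m r1 r2) (0\<^sub>m r2 r1) P2" "four_block_mat Q1 (0\<^sub>m c1 c2) (0\<^sub>m c2 c1) Q2"])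
    show "four_block_mat A (0\<^sub>m r1 c2) (0\<^sub>m r2 c1) D \<in> carrier_mat (r1 + r2) (c1 + c2)" using A D by simp
    show "invertible_mat (four_block_mat P1 (0\<^sub>m r1 r2) (0\<^sub>m r2 r1) P2)" using dg 1 2 by auto
    show "invertible_mat (four_block_mat Q1 (0\<^sub>m c1 c2) (0\<^sub>m c2 c1) Q2)" using dg 1 2 by auto
    have "four_block_mat P1 (0\<^sub>m r1 r2) (0\<^sub>m r2 r1) P2 * four_block_mat A (0\<^sub>m r1 c2) (0\<^sub>m r2 c1) D
      = four_block_mat (P1 * A) (0\<^sub>m r1 c2) (0\<^sub>m r2 c1) (P2 * D)"
      by (subst mult_four_block_mat[OF 1(1) zero_carrier_mat zero_carrier_mat 2(1) A zero_carrier_mat zero_carrier_mat D], insert 1 2 A D, auto)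
    also have "\<dots> * four_block_mat Q1 (0\<^sub>m c1 c2) (0\<^sub>m c2 c1) Q2
      = four_block_mat (P1 * A * Q1) (0\<^sub>m r1 c2) (0\<^sub>m r2 c1) (P2 * D * Q2)"
      by (subst mult_four_block_mat[OF mult_carrier_mat[OF 1(1) A] zero_carrier_mat zero_carrier_mat mult_carrier_mat[OF 2(1) D] 1(2) zero_carrier_mat zero_carrier_mat 2(2)], insert 1 2 A D, auto)
    finally show "four_block_mat P1 (0\<^sub>m r1 r2) (0\<^sub>m r2 r1) P2 * four_block_mat A (0\<^sub>m r1 c2) (0\<^sub>m r2 c1) D *
      four_block_mat Q1 (0\<^sub>m c1 c2) (0\<^sub>m c2 c1) Q2 = four_block_mat A' (0\<^sub>m r1 c2) (0\<^sub>m r2 c1) D'"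
      using 1 2 by simp
  qed (insert 1 2, auto)
qed



primrec Xg :: "nat \<Rightarrow> int mat" where
  "Xg 0 = 0\<^sub>m 0 1"
| "Xg (Suc k) = four_block_mat (mat (k+1) 1 (\<lambda>_. 1)) (- 1\<^sub>m (k+1)) (0\<^sub>m ((k+1)*k div 2) 1) (Xg k)"

lemma tri_suc: "(k+2)*(k+1) div 2 = (k+1) + (k+1)*k div 2" for k :: nat
proof -
  have "(k+2)*(k+1) = 2*(k+1) + (k+1)*k" by (simp add: algebra_simps)
  then show ?thesis by simp
qed

lemma tri_suc': "(Suc k + 1) * Suc k div 2 = (k+1) + (k+1)*k div 2"
  using tri_suc[of k] by (simp add: add.commute)

lemma Xg_carrier: "Xg k \<in> carrier_mat ((k+1)*k div 2) (k+1)"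
proof (induct k)
  case 0 then show ?case by simp
next
  case (Suc k)
  have c: "mat (k+1) 1 (\<lambda>_. 1::int) \<in> carrier_mat (k+1) 1" by simp
  have "Xg (Suc k) \<in> carrier_mat ((k+1) + (k+1)*k div 2) (1 + (k+1))"
    unfolding Xg.simps by (rule four_block_carrier_mat[OF c Suc])
  then show ?case unfolding tri_suc' by simp
qed

lemma Xg_dims[simp]: "dim_row (Xg k) = (k+1)*k div 2" "dim_col (Xg k) = k+1"
  using Xg_carrier[of k] by auto

lemma Xg_Suc_index:
  assumes "i < (k+1) + (k+1)*k div 2" "j < k+2"
  shows "Xg (Suc k) $$ (i,j) = (if i < k+1 then (if j = 0 then 1 else if j = i+1 then -1 else 0)
     else if j = 0 then 0 else Xg k $$ (i - (k+1), j - 1))"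
  using assms by auto

lemma X_aux_Xg: "X_aux k = Xg (Suc k)"
proof (induct k)
  case 0
  show ?case by (rule eq_matI) auto
next
  case (Suc k)
  show ?case unfolding X_aux.simps Suc
    by (simp add: tri_suc' add.commute)
qed

lemma Xg_rowsum: "i < (k+1)*k div 2 \<Longrightarrow> (\<Sum>j<k+1. Xg k $$ (i,j)) = 0"
proof (induct k arbitrary: i)
  case 0 then show ?case by simp
next
  case (Suc k)
  have i: "i < (k+1) + (k+1)*k div 2" using Suc(2) unfolding tri_suc' .
  have "(\<Sum>j<Suc k + 1. Xg (Suc k) $$ (i,j)) = Xg (Suc k) $$ (i,0) + (\<Sum>j<k+1. Xg (Suc k) $$ (i, Suc j))"
    using sum.lessThan_Suc_shift[of "\<lambda>j. Xg (Suc k) $$ (i,j)" "Suc k"] by simp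
  also have "\<dots> = 0"
  proof (cases "i < k+1")
    case True
    have "(\<Sum>j<k+1. Xg (Suc k) $$ (i, Suc j)) = (\<Sum>j<k+1. if j = i then -1 else 0)"
      by (rule sum.cong, simp, subst Xg_Suc_index, insert i True, auto)
    also have "\<dots> = -1" using True by (simp add: sum.delta')
    finally show ?thesis using Xg_Suc_index[OF i, of 0] True by simp
  next
    case False
    have "(\<Sum>j<k+1. Xg (Suc k) $$ (i, Suc j)) = (\<Sum>j<k+1. Xg k $$ (i - (k+1), j))"
      by (rule sum.cong, simp, subst Xg_Suc_index, insert i False, auto)
    also have "\<dots> = 0" using Suc(1)[of "i - (k+1)"] i False by simp
    finally show ?thesis using Xg_Suc_index[OF i, of 0] False by simp
  qed
  finally show ?case .
qed

lemma Xg_gram: "a < k+1 \<Longrightarrow> b < k+1 \<Longrightarrow>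
  (\<Sum>i<(k+1)*k div 2. Xg k $$ (i,a) * Xg k $$ (i,b)) = (if a = b then int k else -1)"
proof (induct k arbitrary: a b)
  case 0 then show ?case by simp
next
  case (Suc k)
  let ?X = "Xg (Suc k)" and ?N = "(k+1)*k div 2"
  have "(\<Sum>i<(Suc k+1)*Suc k div 2. ?X $$ (i,a) * ?X $$ (i,b))
     = (\<Sum>i<k+1. ?X $$ (i,a) * ?X $$ (i,b)) + (\<Sum>i<?N. ?X $$ (k+1+i,a) * ?X $$ (k+1+i,b))"
    unfolding tri_suc' sum_lessThan_add ..
  also have "(\<Sum>i<k+1. ?X $$ (i,a) * ?X $$ (i,b)) =
     (\<Sum>i<k+1. (if a = 0 then 1 else if a = i+1 then -1 else 0) * (if b = 0 then 1 else if b = i+1 then -1 else 0))"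
    by (rule sum.cong, simp, subst (1 2) Xg_Suc_index, insert Suc(2,3), auto)
  also have "(\<Sum>i<?N. ?X $$ (k+1+i,a) * ?X $$ (k+1+i,b)) =
     (\<Sum>i<?N. (if a = 0 then 0 else Xg k $$ (i, a - 1)) * (if b = 0 then 0 else Xg k $$ (i, b - 1)))"
    by (rule sum.cong, simp, subst (1 2) Xg_Suc_index, insert Suc(2,3), auto)
  also have "(\<Sum>i<k+1. (if a = 0 then 1 else if a = i+1 then -1 else 0) * (if b = 0 then 1 else if b = i+1 then -1 else (0::int))) +
     (\<Sum>i<?N. (if a = 0 then 0 else Xg k $$ (i, a - 1)) * (if b = 0 then 0 else Xg k $$ (i, b - 1)))
    = (if a = b then int (Suc k) else -1)"
  proof (cases a)
    case 0
    show ?thesis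
    proof (cases b)
      case 0 with \<open>a = 0\<close> show ?thesis by simp
    next
      case (Suc b')
      have "(\<Sum>i<k+1. (if b = i+1 then -1 else (0::int))) = -1" using Suc Suc.prems(2) by (simp add: sum.delta)
      then show ?thesis using \<open>a = 0\<close> Suc by simp
    qed
  next
    case (Suc a')
    show ?thesis
    proof (cases b)
      case 0
      have "(\<Sum>i<k+1. (if a = i+1 then -1 else (0::int))) = -1" using Suc Suc.prems(1) by (simp add: sum.delta)
      then show ?thesis using \<open>b = 0\<close> Suc by simp
    next
      case (Suc b')
      have 1: "(\<Sum>i<k+1. (if a = i+1 then -1 else 0) * (if b = i+1 then -1 else (0::int))) = (if a' = b' then 1 else 0)"
      proof -
        have "(\<Sum>i<k+1. (if a = i+1 then -1 else 0) * (if b = i+1 then -1 else (0::int))) = (\<Sum>i<k+1. if i = a' then (if a' = b' then 1 else 0) else 0)"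
          by (rule sum.cong, simp, insert \<open>a = Suc a'\<close> Suc, auto)
        also have "\<dots> = (if a' = b' then 1 else 0)" using \<open>a = Suc a'\<close> Suc.prems(1) by (simp add: sum.delta')
        finally show ?thesis .
      qed
      have 2: "(\<Sum>i<?N. Xg k $$ (i, a') * Xg k $$ (i, b')) = (if a' = b' then int k else -1)"
        using Suc.hyps[of a' b'] Suc.prems \<open>a = Suc a'\<close> Suc by simp
      show ?thesis using 1 2 \<open>a = Suc a'\<close> Suc by simp
    qed
  qed
  finally show ?case .
qed



declare Xg.simps(2)[simp del]

lemma eqv_neg:
  assumes A: "A \<in> carrier_mat r c"
  shows "eqv A ((-1) \<cdot>\<^sub>m A)"
proof (rule eqv_I[OF A, of "(-1) \<cdot>\<^sub>m 1\<^sub>m r" "1\<^sub>m c"])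
  show "invertible_mat ((-1) \<cdot>\<^sub>m 1\<^sub>m r :: int mat)"
  proof (rule invertible_det[of _ r])
    show "(-1) \<cdot>\<^sub>m 1\<^sub>m r \<in> carrier_mat r r" by simp
    show "det ((-1) \<cdot>\<^sub>m 1\<^sub>m r :: int mat) = 1 \<or> det ((-1) \<cdot>\<^sub>m 1\<^sub>m r :: int mat) = -1"
      by (cases "even r") auto
  qed
  show "(-1) \<cdot>\<^sub>m 1\<^sub>m r * A * 1\<^sub>m c = (-1) \<cdot>\<^sub>m A"
    using A by (simp add: mult_smult_assoc_mat[of _ r r A c])
qed (use A invertible_one in auto)

abbreviation NN :: "nat \<Rightarrow> nat" where "NN k \<equiv> (k+1)*k div 2"

lemma A_mat_k: "A_mat (k+2) = four_block_mat (- (1\<^sub>m (k+2))) (- transpose_mat (Xg (Suc k)))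
   (- Xg (Suc k)) (- (int (k+2) \<cdot>\<^sub>m 1\<^sub>m ((k+1) + NN k)))"
proof -
  have "(k+2) * (k+2-1) div 2 = (k+1) + NN k" using tri_suc[of k] by simp
  then show ?thesis unfolding A_mat_def X_mat_def X_aux_Xg by simp
qed

definition Mk :: "nat \<Rightarrow> int mat" where
  "Mk k = four_block_mat (1\<^sub>m (k+2)) (transpose_mat (Xg (Suc k))) (Xg (Suc k)) (int (k+2) \<cdot>\<^sub>m 1\<^sub>m ((k+1) + NN k))"

lemma XS_carrier: "Xg (Suc k) \<in> carrier_mat ((k+1) + NN k) (k+2)"
  using Xg_carrier[of "Suc k"] unfolding tri_suc' by simp

lemma step1: "eqv (A_mat (k+2)) (Mk k)"
proof -
  have c: "A_mat (k+2) \<in> carrier_mat ((k+2) + ((k+1) + NN k)) ((k+2) + ((k+1) + NN k))"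
    unfolding A_mat_k by (rule four_block_carrier_mat) simp_all
  have "(-1) \<cdot>\<^sub>m A_mat (k+2) = Mk k"
    unfolding A_mat_k Mk_def using XS_carrier[of k] by (intro eq_matI) auto
  then show ?thesis using eqv_neg[OF c] by simp
qed

definition Bk :: "nat \<Rightarrow> int mat" where
  "Bk k = int (k+2) \<cdot>\<^sub>m 1\<^sub>m ((k+1) + NN k) + (- Xg (Suc k)) * transpose_mat (Xg (Suc k))"

lemma Bk_carrier: "Bk k \<in> carrier_mat ((k+1) + NN k) ((k+1) + NN k)"
  unfolding Bk_def using XS_carrier[of k] by simp

lemma step2: "eqv (Mk k) (four_block_mat (1\<^sub>m (k+2)) (0\<^sub>m (k+2) ((k+1) + NN k)) (0\<^sub>m ((k+1) + NN k) (k+2)) (Bk k))"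
proof -
  let ?X = "Xg (Suc k)" and ?N = "(k+1) + NN k"
  note X = XS_carrier[of k]
  have XT: "transpose_mat ?X \<in> carrier_mat (k+2) ?N" using X by simp
  have nX: "- ?X \<in> carrier_mat ?N (k+2)" using X by simp
  have nXT: "- transpose_mat ?X \<in> carrier_mat (k+2) ?N" using X by simp
  have nI: "int (k+2) \<cdot>\<^sub>m 1\<^sub>m ?N \<in> carrier_mat ?N ?N" by simp
  have e1: "eqv (Mk k) (four_block_mat (1\<^sub>m (k+2)) (transpose_mat ?X) (?X + (- ?X) * 1\<^sub>m (k+2))
     (int (k+2) \<cdot>\<^sub>m 1\<^sub>m ?N + (- ?X) * transpose_mat ?X))"
    unfolding Mk_def by (rule rowop_lower[OF one_carrier_mat XT X nI nX])
  have q1: "?X + (- ?X) * 1\<^sub>m (k+2) = 0\<^sub>m ?N (k+2)" using X by (intro eq_matI) auto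
  have e2: "eqv (four_block_mat (1\<^sub>m (k+2)) (transpose_mat ?X) (0\<^sub>m ?N (k+2)) (Bk k))
    (four_block_mat (1\<^sub>m (k+2)) (transpose_mat ?X + 1\<^sub>m (k+2) * (- transpose_mat ?X)) (0\<^sub>m ?N (k+2)) (Bk k + 0\<^sub>m ?N (k+2) * (- transpose_mat ?X)))"
    by (rule colop_right[OF one_carrier_mat XT zero_carrier_mat Bk_carrier nXT])
  have q2: "transpose_mat ?X + 1\<^sub>m (k+2) * (- transpose_mat ?X) = 0\<^sub>m (k+2) ?N" using X by (intro eq_matI) auto
  have q3: "Bk k + 0\<^sub>m ?N (k+2) * (- transpose_mat ?X) = Bk k" using X Bk_carrier[of k] by (intro eq_matI) auto
  show ?thesis using eqv_trans[OF e1[unfolded q1 Bk_def[symmetric]] e2[unfolded q2 q3]] .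
qed


definition B11 :: "nat \<Rightarrow> int mat" where
  "B11 k = mat (k+1) (k+1) (\<lambda>(i,j). if i = j then int k else -1)"

definition B22 :: "nat \<Rightarrow> int mat" where
  "B22 k = int (k+2) \<cdot>\<^sub>m 1\<^sub>m (NN k) + (- Xg k) * transpose_mat (Xg k)"

definition Ck :: "nat \<Rightarrow> int mat" where
  "Ck k = four_block_mat (0\<^sub>m (k+1) (k+1)) (0\<^sub>m (k+1) (NN k)) (Xg k) (int (k+2) \<cdot>\<^sub>m 1\<^sub>m (NN k))"

lemma Bk_entry:
  assumes ij: "i < (k+1) + NN k" "j < (k+1) + NN k"
  shows "Bk k $$ (i,j) = (if i = j then int (k+2) else 0)
    - (Xg (Suc k) $$ (i,0) * Xg (Suc k) $$ (j,0) + (\<Sum>l<k+1. Xg (Suc k) $$ (i,Suc l) * Xg (Suc k) $$ (j,Suc l)))"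
proof -
  let ?X = "Xg (Suc k)" and ?N = "(k+1) + NN k"
  note X = XS_carrier[of k]
  have XT: "transpose_mat ?X \<in> carrier_mat (k+2) ?N" using X by simp
  have nX: "- ?X \<in> carrier_mat ?N (k+2)" using X by simp
  have "((- ?X) * transpose_mat ?X) $$ (i,j) = (\<Sum>l<k+2. (- ?X) $$ (i,l) * transpose_mat ?X $$ (l,j))"
    by (rule mult_entry[OF nX XT ij])
  also have "\<dots> = (\<Sum>l<k+2. - (?X $$ (i,l) * ?X $$ (j,l)))"
    by (rule sum.cong, simp, insert X ij, auto)
  also have "\<dots> = - (\<Sum>l<Suc (Suc k). ?X $$ (i,l) * ?X $$ (j,l))" by (simp add: sum_negf)
  also have "(\<Sum>l<Suc (Suc k). ?X $$ (i,l) * ?X $$ (j,l)) = ?X $$ (i,0) * ?X $$ (j,0) + (\<Sum>l<k+1. ?X $$ (i,Suc l) * ?X $$ (j,Suc l))"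
    by (subst sum.lessThan_Suc_shift) simp
  finally have "((- ?X) * transpose_mat ?X) $$ (i,j) = - (?X $$ (i,0) * ?X $$ (j,0) + (\<Sum>l<k+1. ?X $$ (i,Suc l) * ?X $$ (j,Suc l)))" .
  then show ?thesis unfolding Bk_def using ij X by simp
qed

lemma Bk_block: "Bk k = four_block_mat (B11 k) (transpose_mat (Xg k)) (Xg k) (B22 k)"
proof (rule eq_matI)
  let ?X = "Xg (Suc k)" and ?N = "(k+1) + NN k" and ?Y = "Xg k"
  have dB: "dim_row (Bk k) = ?N" "dim_col (Bk k) = ?N" using Bk_carrier[of k] by auto
  have d2: "B22 k \<in> carrier_mat (NN k) (NN k)" unfolding B22_def by (rule carrier_matI) simp_all
  have d1: "B11 k \<in> carrier_mat (k+1) (k+1)" unfolding B11_def by simp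
  show "dim_row (Bk k) = dim_row (four_block_mat (B11 k) (transpose_mat (Xg k)) (Xg k) (B22 k))"
    "dim_col (Bk k) = dim_col (four_block_mat (B11 k) (transpose_mat (Xg k)) (Xg k) (B22 k))"
    using dB d1 d2 by auto
  fix i j assume "i < dim_row (four_block_mat (B11 k) (transpose_mat (Xg k)) (Xg k) (B22 k))"
    "j < dim_col (four_block_mat (B11 k) (transpose_mat (Xg k)) (Xg k) (B22 k))"
  then have ij: "i < ?N" "j < ?N" using d1 d2 by auto
  have top: "?X $$ (i, Suc l) = (if l = i then -1 else 0)" if "i < k+1" "l < Suc k" for i l
    using Xg_Suc_index[of i k "Suc l"] that by simp
  have bot: "?X $$ (i, Suc l) = ?Y $$ (i - (k+1), l)" if "i < ?N" "\<not> i < k+1" "l < Suc k" for i l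
    using Xg_Suc_index[of i k "Suc l"] that by simp
  have top0: "?X $$ (i, 0) = 1" if "i < k+1" for i using Xg_Suc_index[of i k 0] that by simp
  have bot0: "?X $$ (i, 0) = 0" if "i < ?N" "\<not> i < k+1" for i using Xg_Suc_index[of i k 0] that by simp
  show "Bk k $$ (i,j) = four_block_mat (B11 k) (transpose_mat (Xg k)) (Xg k) (B22 k) $$ (i,j)"
  proof (cases "i < k+1")
    case ti: True
    show ?thesis
    proof (cases "j < k+1")
      case tj: True
      have h: "?X $$ (i,Suc l) * ?X $$ (j,Suc l) = (if l = i then -1 else 0) * (if l = j then -1 else 0)" if "l < Suc k" for l
        using top[OF ti that] top[OF tj that] by (simp only:)
      have "(\<Sum>l<k+1. ?X $$ (i,Suc l) * ?X $$ (j,Suc l)) = (\<Sum>l<k+1. (if l = i then -1 else 0) * (if l = j then -1 else 0))"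
        by (rule sum.cong, simp, rule h, simp)
      also have "\<dots> = (if i = j then 1 else 0)" by (subst sum_delta_l[OF ti]) auto
      finally show ?thesis unfolding Bk_entry[OF ij] using ti tj d1 d2 top0[OF ti] top0[OF tj]
        by (simp add: B11_def)
    next
      case fj: False
      have h: "?X $$ (i,Suc l) * ?X $$ (j,Suc l) = (if l = i then -1 else 0) * ?Y $$ (j - (k+1), l)" if "l < Suc k" for l
        using top[OF ti that] bot[OF ij(2) fj that] by (simp only:)
      have "(\<Sum>l<k+1. ?X $$ (i,Suc l) * ?X $$ (j,Suc l)) = (\<Sum>l<k+1. (if l = i then -1 else 0) * ?Y $$ (j - (k+1), l))"
        by (rule sum.cong, simp, rule h, simp)
      also have "\<dots> = - ?Y $$ (j - (k+1), i)" by (subst sum_delta_l[OF ti]) auto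
      finally show ?thesis unfolding Bk_entry[OF ij] using ti fj ij d1 d2 top0[OF ti] bot0[OF ij(2) fj]
        by simp
    qed
  next
    case fi: False
    show ?thesis
    proof (cases "j < k+1")
      case tj: True
      have h: "?X $$ (i,Suc l) * ?X $$ (j,Suc l) = ?Y $$ (i - (k+1), l) * (if l = j then -1 else 0)" if "l < Suc k" for l
        using top[OF tj that] bot[OF ij(1) fi that] by (simp only:)
      have "(\<Sum>l<k+1. ?X $$ (i,Suc l) * ?X $$ (j,Suc l)) = (\<Sum>l<k+1. ?Y $$ (i - (k+1), l) * (if l = j then -1 else 0))"
        by (rule sum.cong, simp, rule h, simp)
      also have "\<dots> = - ?Y $$ (i - (k+1), j)" by (subst sum_delta_r[OF tj]) auto
      finally show ?thesis unfolding Bk_entry[OF ij] using tj fi ij d1 d2 top0[OF tj] bot0[OF ij(1) fi]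
        by simp
    next
      case fj: False
      have h: "?X $$ (i,Suc l) * ?X $$ (j,Suc l) = ?Y $$ (i - (k+1), l) * ?Y $$ (j - (k+1), l)" if "l < Suc k" for l
        using bot[OF ij(1) fi that] bot[OF ij(2) fj that] by (simp only:)
      have "(\<Sum>l<k+1. ?X $$ (i,Suc l) * ?X $$ (j,Suc l)) = (\<Sum>l<k+1. ?Y $$ (i - (k+1), l) * ?Y $$ (j - (k+1), l))"
        by (rule sum.cong, simp, rule h, simp)
      moreover have "B22 k $$ (i - (k+1), j - (k+1)) = (if i = j then int (k+2) else 0) - (\<Sum>l<k+1. ?Y $$ (i - (k+1), l) * ?Y $$ (j - (k+1), l))"
      proof -
        have Y: "?Y \<in> carrier_mat (NN k) (k+1)" by (rule Xg_carrier)
        have i': "i - (k+1) < NN k" "j - (k+1) < NN k" using ij fi fj by auto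
        have "((- ?Y) * transpose_mat ?Y) $$ (i - (k+1), j - (k+1)) = (\<Sum>l<k+1. (- ?Y) $$ (i - (k+1), l) * transpose_mat ?Y $$ (l, j - (k+1)))"
          by (rule mult_entry[of _ _ "k+1" _ "NN k"], insert Y i', auto)
        also have "\<dots> = - (\<Sum>l<k+1. ?Y $$ (i - (k+1), l) * ?Y $$ (j - (k+1), l))"
          by (subst sum_negf[symmetric], rule sum.cong, simp, insert Y i', auto)
        finally have P: "((- ?Y) * transpose_mat ?Y) $$ (i - (k+1), j - (k+1)) = - (\<Sum>l<k+1. ?Y $$ (i - (k+1), l) * ?Y $$ (j - (k+1), l))" .
        have eqij: "(i - (k+1) = j - (k+1)) = (i = j)" using fi fj by auto
        have "B22 k $$ (i - (k+1), j - (k+1)) = (int (k+2) \<cdot>\<^sub>m 1\<^sub>m (NN k)) $$ (i - (k+1), j - (k+1)) + ((- ?Y) * transpose_mat ?Y) $$ (i - (k+1), j - (k+1))"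
          unfolding B22_def by (rule index_add_mat(1)) (use i' in simp_all)
        also have "\<dots> = (int (k+2) \<cdot>\<^sub>m 1\<^sub>m (NN k)) $$ (i - (k+1), j - (k+1)) - (\<Sum>l<k+1. ?Y $$ (i - (k+1), l) * ?Y $$ (j - (k+1), l))"
          by (simp only: P)
        finally show ?thesis using i' eqij by simp
      qed
      ultimately show ?thesis unfolding Bk_entry[OF ij] using fi fj ij d1 d2 bot0[OF ij(1) fi] bot0[OF ij(2) fj]
        by simp
    qed
  qed
qed


lemma B11_carrier: "B11 k \<in> carrier_mat (k+1) (k+1)" unfolding B11_def by simp
lemma B22_carrier: "B22 k \<in> carrier_mat (NN k) (NN k)" unfolding B22_def by (rule carrier_matI) simp_all

lemma q1: "transpose_mat (Xg k) + B11 k * transpose_mat (Xg k) = int (k+2) \<cdot>\<^sub>m transpose_mat (Xg k)"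
proof (rule eq_matI)
  let ?Y = "Xg k"
  have Y: "?Y \<in> carrier_mat (NN k) (k+1)" by (rule Xg_carrier)
  have YT: "transpose_mat ?Y \<in> carrier_mat (k+1) (NN k)" using Y by simp
  fix i j assume "i < dim_row (int (k+2) \<cdot>\<^sub>m transpose_mat ?Y)" "j < dim_col (int (k+2) \<cdot>\<^sub>m transpose_mat ?Y)"
  then have ij: "i < k+1" "j < NN k" by auto
  have "(B11 k * transpose_mat ?Y) $$ (i,j) = (\<Sum>l<k+1. B11 k $$ (i,l) * transpose_mat ?Y $$ (l,j))"
    by (rule mult_entry[OF B11_carrier YT ij])
  also have "\<dots> = (\<Sum>l<k+1. (if l = i then int (k+1) else 0) * ?Y $$ (j,l) - ?Y $$ (j,l))"
    by (rule sum.cong, simp, insert ij, auto simp: B11_def algebra_simps)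
  also have "\<dots> = int (k+1) * ?Y $$ (j,i) - (\<Sum>l<k+1. ?Y $$ (j,l))"
    by (simp only: sum_subtractf sum_delta_l[OF ij(1)])
  also have "\<dots> = int (k+1) * ?Y $$ (j,i)" using Xg_rowsum[OF ij(2)] by simp
  finally show "(transpose_mat ?Y + B11 k * transpose_mat ?Y) $$ (i,j) = (int (k+2) \<cdot>\<^sub>m transpose_mat ?Y) $$ (i,j)"
    using ij YT B11_carrier[of k] by (simp add: algebra_simps)
qed (use B11_carrier[of k] in auto)

lemma q2: "B22 k + Xg k * transpose_mat (Xg k) = int (k+2) \<cdot>\<^sub>m 1\<^sub>m (NN k)"
proof -
  let ?Y = "Xg k" and ?I = "int (k+2) \<cdot>\<^sub>m 1\<^sub>m (NN k)"
  have Y: "?Y \<in> carrier_mat (NN k) (k+1)" by (rule Xg_carrier)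
  have P: "?Y * transpose_mat ?Y \<in> carrier_mat (NN k) (NN k)" using Y by simp
  have I: "?I \<in> carrier_mat (NN k) (NN k)" by simp
  have "B22 k + ?Y * transpose_mat ?Y = (?I + - (?Y * transpose_mat ?Y)) + ?Y * transpose_mat ?Y"
    unfolding B22_def by simp
  also have "\<dots> = ?I + (- (?Y * transpose_mat ?Y) + ?Y * transpose_mat ?Y)"
    by (rule assoc_add_mat[OF I uminus_carrier_mat[OF P] P])
  also have "\<dots> = ?I" using P I by simp
  finally show ?thesis .
qed

lemma q3: "B11 k + (- transpose_mat (Xg k)) * Xg k = 0\<^sub>m (k+1) (k+1)"
proof (rule eq_matI)
  let ?Y = "Xg k"
  have Y: "?Y \<in> carrier_mat (NN k) (k+1)" by (rule Xg_carrier)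
  have YT: "transpose_mat ?Y \<in> carrier_mat (k+1) (NN k)" using Y by simp
  fix i j assume "i < dim_row (0\<^sub>m (k+1) (k+1) :: int mat)" "j < dim_col (0\<^sub>m (k+1) (k+1) :: int mat)"
  then have ij: "i < k+1" "j < k+1" by auto
  have "(transpose_mat ?Y * ?Y) $$ (i,j) = (\<Sum>l<NN k. transpose_mat ?Y $$ (i,l) * ?Y $$ (l,j))"
    by (rule mult_entry[OF YT Y ij])
  also have "\<dots> = (\<Sum>l<NN k. ?Y $$ (l,i) * ?Y $$ (l,j))"
    by (rule sum.cong, simp, insert ij, auto)
  also have "\<dots> = (if i = j then int k else -1)" by (rule Xg_gram[OF ij])
  finally have "(transpose_mat ?Y * ?Y) $$ (i,j) = (if i = j then int k else -1)" .
  then show "(B11 k + (- transpose_mat ?Y) * ?Y) $$ (i,j) = (0\<^sub>m (k+1) (k+1)) $$ (i,j)"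
    using ij Y by (simp add: B11_def)
qed (use B11_carrier[of k] in auto)

lemma q4: "int (k+2) \<cdot>\<^sub>m transpose_mat (Xg k) + (- transpose_mat (Xg k)) * (int (k+2) \<cdot>\<^sub>m 1\<^sub>m (NN k)) = 0\<^sub>m (k+1) (NN k)"
proof -
  let ?Y = "Xg k"
  have Y: "?Y \<in> carrier_mat (NN k) (k+1)" by (rule Xg_carrier)
  have nYT: "- transpose_mat ?Y \<in> carrier_mat (k+1) (NN k)" using Y by simp
  have "(- transpose_mat ?Y) * (int (k+2) \<cdot>\<^sub>m 1\<^sub>m (NN k)) = int (k+2) \<cdot>\<^sub>m ((- transpose_mat ?Y) * 1\<^sub>m (NN k))"
    by (rule mult_smult_distrib[OF nYT one_carrier_mat])
  also have "\<dots> = int (k+2) \<cdot>\<^sub>m (- transpose_mat ?Y)" using nYT by simp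
  finally have e: "(- transpose_mat ?Y) * (int (k+2) \<cdot>\<^sub>m 1\<^sub>m (NN k)) = int (k+2) \<cdot>\<^sub>m (- transpose_mat ?Y)" .
  show ?thesis unfolding e by (rule eq_matI) (use Y in auto)
qed

lemma step3: "eqv (Bk k) (Ck k)"
proof -
  let ?Y = "Xg k" and ?n = "int (k+2)"
  have Y: "?Y \<in> carrier_mat (NN k) (k+1)" by (rule Xg_carrier)
  have YT: "transpose_mat ?Y \<in> carrier_mat (k+1) (NN k)" using Y by simp
  have nYT: "- transpose_mat ?Y \<in> carrier_mat (k+1) (NN k)" using Y by simp
  have nI: "?n \<cdot>\<^sub>m 1\<^sub>m (NN k) \<in> carrier_mat (NN k) (NN k)" by simp
  have nYT': "?n \<cdot>\<^sub>m transpose_mat ?Y \<in> carrier_mat (k+1) (NN k)" using Y by simp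
  have e1: "eqv (Bk k) (four_block_mat (B11 k) (?n \<cdot>\<^sub>m transpose_mat ?Y) ?Y (?n \<cdot>\<^sub>m 1\<^sub>m (NN k)))"
    using colop_right[OF B11_carrier YT Y B22_carrier YT] unfolding Bk_block[symmetric] q1 q2 .
  have e2: "eqv (four_block_mat (B11 k) (?n \<cdot>\<^sub>m transpose_mat ?Y) ?Y (?n \<cdot>\<^sub>m 1\<^sub>m (NN k))) (Ck k)"
    using rowop_upper[OF B11_carrier nYT' Y nI nYT] unfolding q3 q4 Ck_def .
  show ?thesis by (rule eqv_trans[OF e1 e2])
qed



definition Cexp :: "nat \<Rightarrow> int mat" where
  "Cexp k = mat ((k+1) + NN k) ((k+1) + NN k) (\<lambda>(i,l). if i < k+1 then 0 else if i < 2*k+1 then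
     (if l = 0 then 1 else if l = i - k then -1 else if l = i then int (k+2) else 0)
     else if l = i then int (k+2) else 0)"

definition C11 :: "nat \<Rightarrow> int mat" where
  "C11 j = mat (2*j+3) (2*j+3) (\<lambda>(i,l). if i < j+2 then 0 else if l = 0 then 1 else if l = i - (j+1) then -1
     else if l = i then int (j+3) else 0)"

definition C21 :: "nat \<Rightarrow> int mat" where
  "C21 j = mat (NN j) (2*j+3) (\<lambda>(i,l). if 1 \<le> l \<and> l < j+2 then Xg j $$ (i, l-1) else 0)"

definition Yr :: "nat \<Rightarrow> int mat" where
  "Yr j = mat (NN j) (2*j+3) (\<lambda>(i,l). if l < j+2 then 0 else Xg j $$ (i, l-(j+2)))"

definition Yc :: "nat \<Rightarrow> int mat" where
  "Yc j = mat (NN j) (2*j+3) (\<lambda>(i,l). if l < j+2 then 0 else - Xg j $$ (i, l-(j+2)))"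

definition Zm :: "nat \<Rightarrow> int mat" where
  "Zm j = mat (NN j) (2*j+3) (\<lambda>(i,l). if l < j+2 then 0 else int (j+3) * Xg j $$ (i, l-(j+2)))"

lemma NN_Suc: "NN (Suc j) = (j+1) + NN j" using tri_suc'[of j] by simp

lemma reblock: "Ck (Suc j) = four_block_mat (C11 j) (0\<^sub>m (2*j+3) (NN j)) (C21 j) (int (j+3) \<cdot>\<^sub>m 1\<^sub>m (NN j))"
proof (rule eq_matI)
  have dX: "dim_row (Xg (Suc j)) = (j+1) + NN j" "dim_col (Xg (Suc j)) = j+2"
    using Xg_dims[of "Suc j"] unfolding NN_Suc by auto
  show "dim_row (Ck (Suc j)) = dim_row (four_block_mat (C11 j) (0\<^sub>m (2*j+3) (NN j)) (C21 j) (int (j+3) \<cdot>\<^sub>m 1\<^sub>m (NN j)))"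
    "dim_col (Ck (Suc j)) = dim_col (four_block_mat (C11 j) (0\<^sub>m (2*j+3) (NN j)) (C21 j) (int (j+3) \<cdot>\<^sub>m 1\<^sub>m (NN j)))"
    unfolding Ck_def NN_Suc by (simp_all add: C11_def)
  fix i l assume "i < dim_row (four_block_mat (C11 j) (0\<^sub>m (2*j+3) (NN j)) (C21 j) (int (j+3) \<cdot>\<^sub>m 1\<^sub>m (NN j)))"
    "l < dim_col (four_block_mat (C11 j) (0\<^sub>m (2*j+3) (NN j)) (C21 j) (int (j+3) \<cdot>\<^sub>m 1\<^sub>m (NN j)))"
  then have il: "i < 2*j+3 + NN j" "l < 2*j+3 + NN j" by (auto simp: C11_def)
  have L: "Ck (Suc j) $$ (i,l) = (if i < j+2 then 0 else if l < j+2 then Xg (Suc j) $$ (i - (j+2), l)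
      else if i = l then int (j+3) else 0)"
    unfolding Ck_def NN_Suc using il dX by auto
  have R: "four_block_mat (C11 j) (0\<^sub>m (2*j+3) (NN j)) (C21 j) (int (j+3) \<cdot>\<^sub>m 1\<^sub>m (NN j)) $$ (i,l) =
    (if i < 2*j+3 then (if l < 2*j+3 then C11 j $$ (i,l) else 0) else if l < 2*j+3 then C21 j $$ (i - (2*j+3), l)
     else if i = l then int (j+3) else 0)"
    using il by (auto simp: C11_def C21_def)
  show "Ck (Suc j) $$ (i,l) = four_block_mat (C11 j) (0\<^sub>m (2*j+3) (NN j)) (C21 j) (int (j+3) \<cdot>\<^sub>m 1\<^sub>m (NN j)) $$ (i,l)"
  proof -
    have ee: "i - (2*j+3) = i - Suc (Suc (Suc (j + j)))" by arith
    show ?thesis unfolding L R using il by (auto simp: Xg_Suc_index C11_def C21_def ee)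
  qed
qed


lemma C11_carrier: "C11 j \<in> carrier_mat (2*j+3) (2*j+3)" unfolding C11_def by simp
lemma C21_carrier: "C21 j \<in> carrier_mat (NN j) (2*j+3)" unfolding C21_def by simp
lemma Yr_carrier: "Yr j \<in> carrier_mat (NN j) (2*j+3)" unfolding Yr_def by simp
lemma Yc_carrier: "Yc j \<in> carrier_mat (NN j) (2*j+3)" unfolding Yc_def by simp
lemma Zm_carrier: "Zm j \<in> carrier_mat (NN j) (2*j+3)" unfolding Zm_def by simp

lemma YC: "C21 j + Yr j * C11 j = Zm j"
proof (rule eq_matI)
  fix i l assume "i < dim_row (Zm j)" "l < dim_col (Zm j)"
  then have il: "i < NN j" "l < 2*j+3" by (auto simp: Zm_def)
  let ?X = "Xg j" and ?n = "int (j+3)"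
  have s: "2*j+3 = (j+2)+(j+1)" by simp
  have "(Yr j * C11 j) $$ (i,l) = (\<Sum>r<2*j+3. Yr j $$ (i,r) * C11 j $$ (r,l))"
    by (rule mult_entry[OF Yr_carrier C11_carrier il])
  also have "\<dots> = (\<Sum>r<j+2. Yr j $$ (i,r) * C11 j $$ (r,l)) + (\<Sum>r<j+1. Yr j $$ (i,j+2+r) * C11 j $$ (j+2+r,l))"
    unfolding s by (rule sum_lessThan_add)
  also have "(\<Sum>r<j+2. Yr j $$ (i,r) * C11 j $$ (r,l)) = 0"
    by (rule sum.neutral, insert il, auto simp: Yr_def)
  also have "(\<Sum>r<j+1. Yr j $$ (i,j+2+r) * C11 j $$ (j+2+r,l)) =
     (\<Sum>r<j+1. ?X $$ (i,r) * (if l = 0 then 1 else if l = r+1 then -1 else if l = j+2+r then ?n else 0))"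
    by (rule sum.cong, simp, insert il, auto simp: Yr_def C11_def)
  finally have YC: "(Yr j * C11 j) $$ (i,l) = (\<Sum>r<j+1. ?X $$ (i,r) * (if l = 0 then 1 else if l = r+1 then -1 else if l = j+2+r then ?n else 0))"
    by simp
  have add: "(C21 j + Yr j * C11 j) $$ (i,l) = C21 j $$ (i,l) + (Yr j * C11 j) $$ (i,l)"
    by (rule index_add_mat(1)) (use il in \<open>simp_all add: Yr_def C11_def\<close>)
  have main: "C21 j $$ (i,l) + (\<Sum>r<j+1. ?X $$ (i,r) * (if l = 0 then 1 else if l = r+1 then -1 else if l = j+2+r then ?n else 0)) = Zm j $$ (i,l)"
  proof (cases "l = 0")
    case True
    then show ?thesis using il True Xg_rowsum[OF il(1)] by (simp add: C21_def Zm_def)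
  next
    case l0: False
    show ?thesis
    proof (cases "l < j+2")
      case True
      have "(\<Sum>r<j+1. ?X $$ (i,r) * (if l = 0 then 1 else if l = r+1 then -1 else if l = j+2+r then ?n else 0))
        = (\<Sum>r<j+1. ?X $$ (i,r) * (if r = l - 1 then -1 else 0))"
        by (rule sum.cong, simp, insert l0 True, auto)
      also have "\<dots> = - ?X $$ (i, l-1)" using True l0 by (subst sum_delta_r) auto
      finally show ?thesis using il True l0 by (simp add: C21_def Zm_def)
    next
      case False
      have "(\<Sum>r<j+1. ?X $$ (i,r) * (if l = 0 then 1 else if l = r+1 then -1 else if l = j+2+r then ?n else 0))
        = (\<Sum>r<j+1. ?X $$ (i,r) * (if r = l - (j+2) then ?n else 0))"
        by (rule sum.cong, simp, insert l0 False, auto)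
      also have "\<dots> = ?X $$ (i, l - (j+2)) * ?n" using False il by (subst sum_delta_r) auto
      finally show ?thesis using il False l0 by (simp add: C21_def Zm_def)
    qed
  qed
  show "(C21 j + Yr j * C11 j) $$ (i,l) = Zm j $$ (i,l)"
    unfolding add YC by (rule main)
qed (auto simp: Zm_def C21_def Yr_def C11_def)

lemma ZY: "Zm j + (int (j+3) \<cdot>\<^sub>m 1\<^sub>m (NN j)) * Yc j = 0\<^sub>m (NN j) (2*j+3)"
proof -
  have "(int (j+3) \<cdot>\<^sub>m 1\<^sub>m (NN j)) * Yc j = int (j+3) \<cdot>\<^sub>m (1\<^sub>m (NN j) * Yc j)"
    by (rule mult_smult_assoc_mat[OF one_carrier_mat Yc_carrier])
  also have "\<dots> = int (j+3) \<cdot>\<^sub>m Yc j" using Yc_carrier[of j] by simp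
  finally have e: "(int (j+3) \<cdot>\<^sub>m 1\<^sub>m (NN j)) * Yc j = int (j+3) \<cdot>\<^sub>m Yc j" .
  show ?thesis unfolding e by (rule eq_matI) (auto simp: Zm_def Yc_def)
qed

lemma step4: "eqv (Ck k) (Cexp k)"
proof (cases k)
  case 0
  show ?thesis unfolding 0 by (rule eqv_eq, rule eq_matI) (auto simp: Ck_def Cexp_def)
next
  case (Suc j)
  let ?n = "int (j+3)" and ?I = "int (j+3) \<cdot>\<^sub>m 1\<^sub>m (NN j)"
  have nI: "?I \<in> carrier_mat (NN j) (NN j)" by simp
  have e1: "eqv (Ck (Suc j)) (four_block_mat (C11 j) (0\<^sub>m (2*j+3) (NN j)) (C21 j + Yr j * C11 j) (?I + Yr j * 0\<^sub>m (2*j+3) (NN j)))"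
    unfolding reblock by (rule rowop_lower[OF C11_carrier zero_carrier_mat C21_carrier nI Yr_carrier])
  have q: "?I + Yr j * 0\<^sub>m (2*j+3) (NN j) = ?I" using Yr_carrier[of j] by simp
  have e2: "eqv (four_block_mat (C11 j) (0\<^sub>m (2*j+3) (NN j)) (Zm j) ?I)
     (four_block_mat (C11 j + 0\<^sub>m (2*j+3) (NN j) * Yc j) (0\<^sub>m (2*j+3) (NN j)) (Zm j + ?I * Yc j) ?I)"
    by (rule colop_left[OF C11_carrier zero_carrier_mat Zm_carrier nI Yc_carrier])
  have q2: "C11 j + 0\<^sub>m (2*j+3) (NN j) * Yc j = C11 j" using Yc_carrier[of j] C11_carrier[of j] by simp
  have e3: "four_block_mat (C11 j) (0\<^sub>m (2*j+3) (NN j)) (0\<^sub>m (NN j) (2*j+3)) ?I = Cexp (Suc j)"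
  proof (rule eq_matI)
    show "dim_row (four_block_mat (C11 j) (0\<^sub>m (2*j+3) (NN j)) (0\<^sub>m (NN j) (2*j+3)) ?I) = dim_row (Cexp (Suc j))"
      "dim_col (four_block_mat (C11 j) (0\<^sub>m (2*j+3) (NN j)) (0\<^sub>m (NN j) (2*j+3)) ?I) = dim_col (Cexp (Suc j))"
      unfolding Cexp_def NN_Suc by (simp_all add: C11_def)
    fix i l assume "i < dim_row (Cexp (Suc j))" "l < dim_col (Cexp (Suc j))"
    then have il: "i < 2*j+3 + NN j" "l < 2*j+3 + NN j" unfolding Cexp_def NN_Suc by auto
    have L: "four_block_mat (C11 j) (0\<^sub>m (2*j+3) (NN j)) (0\<^sub>m (NN j) (2*j+3)) ?I $$ (i,l) =
      (if i < 2*j+3 then (if l < 2*j+3 then C11 j $$ (i,l) else 0) else if l < 2*j+3 then 0 else if i = l then ?n else 0)"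
      using il by (auto simp: C11_def)
    have R: "Cexp (Suc j) $$ (i,l) = (if i < j+2 then 0 else if i < 2*j+3 then
       (if l = 0 then 1 else if l = i - (j+1) then -1 else if l = i then ?n else 0)
       else if l = i then ?n else 0)"
      using il unfolding Cexp_def NN_Suc by simp
    show "four_block_mat (C11 j) (0\<^sub>m (2*j+3) (NN j)) (0\<^sub>m (NN j) (2*j+3)) ?I $$ (i,l) = Cexp (Suc j) $$ (i,l)"
      unfolding L R
    proof (cases "i < 2*j+3")
      case True
      show "(if i < 2*j+3 then (if l < 2*j+3 then C11 j $$ (i,l) else 0) else if l < 2*j+3 then 0 else if i = l then ?n else 0) =
        (if i < j+2 then 0 else if i < 2*j+3 then
       (if l = 0 then 1 else if l = i - (j+1) then -1 else if l = i then ?n else 0)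
       else if l = i then ?n else 0)"
      proof (cases "l < 2*j+3")
        case True
        then show ?thesis using \<open>i < 2*j+3\<close> by (simp add: C11_def)
      qed (use True in auto)
    qed auto
  qed
  show ?thesis unfolding Suc
    using eqv_trans[OF e1[unfolded YC q] e2[unfolded ZY q2]] unfolding e3 .
qed



abbreviation SS :: "nat \<Rightarrow> nat" where "SS k \<equiv> 2*k+3 + NN k"

definition Gm :: "nat \<Rightarrow> int mat" where
  "Gm k = mat (SS k) (SS k) (\<lambda>(i,j). if i < k+2 then (if i = j then 1 else 0) else if i < 2*k+3 then 0
     else if i < 3*k+3 then (if j = k+2 then 1 else if j = i - k then -1 else if j = i then int (k+2) else 0)
     else if j = i then int (k+2) else 0)"

definition Qa :: "nat \<Rightarrow> int mat" where
  "Qa k = mat (SS k) (SS k) (\<lambda>(l,j). if l = j then 1 else if j = k+2 \<and> k+2 < l \<and> l < 2*k+3 then 1 else 0)"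

definition G1 :: "nat \<Rightarrow> int mat" where
  "G1 k = mat (SS k) (SS k) (\<lambda>(i,j). if i < k+2 then (if i = j then 1 else 0) else if i < 2*k+3 then 0
     else if i < 3*k+3 then (if j = i - k then -1 else if j = i then int (k+2) else 0)
     else if j = i then int (k+2) else 0)"

definition Qb :: "nat \<Rightarrow> int mat" where
  "Qb k = mat (SS k) (SS k) (\<lambda>(l,j). if l = j then 1 else if 2*k+3 \<le> j \<and> j < 3*k+3 \<and> l + k = j then int (k+2) else 0)"

definition G2 :: "nat \<Rightarrow> int mat" where
  "G2 k = mat (SS k) (SS k) (\<lambda>(i,j). if i < k+2 then (if i = j then 1 else 0) else if i < 2*k+3 then 0
     else if i < 3*k+3 then (if j = i - k then -1 else 0)
     else if j = i then int (k+2) else 0)"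

lemma Gm_carrier: "Gm k \<in> carrier_mat (SS k) (SS k)" unfolding Gm_def by simp
lemma Qa_carrier: "Qa k \<in> carrier_mat (SS k) (SS k)" unfolding Qa_def by simp
lemma G1_carrier: "G1 k \<in> carrier_mat (SS k) (SS k)" unfolding G1_def by simp
lemma Qb_carrier: "Qb k \<in> carrier_mat (SS k) (SS k)" unfolding Qb_def by simp
lemma G2_carrier: "G2 k \<in> carrier_mat (SS k) (SS k)" unfolding G2_def by simp

lemma NN_ge: "k \<le> NN k"
proof -
  have "2 * k \<le> (k+1)*k" by simp
  then show ?thesis by linarith
qed

lemma Gm_eq: "four_block_mat (1\<^sub>m (k+2)) (0\<^sub>m (k+2) ((k+1) + NN k)) (0\<^sub>m ((k+1) + NN k) (k+2)) (Cexp k) = Gm k"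
proof (rule eq_matI)
  show "dim_row (four_block_mat (1\<^sub>m (k+2)) (0\<^sub>m (k+2) ((k+1) + NN k)) (0\<^sub>m ((k+1) + NN k) (k+2)) (Cexp k)) = dim_row (Gm k)"
    "dim_col (four_block_mat (1\<^sub>m (k+2)) (0\<^sub>m (k+2) ((k+1) + NN k)) (0\<^sub>m ((k+1) + NN k) (k+2)) (Cexp k)) = dim_col (Gm k)"
    by (simp_all add: Gm_def Cexp_def)
  fix i j assume "i < dim_row (Gm k)" "j < dim_col (Gm k)"
  then have ij: "i < SS k" "j < SS k" by (auto simp: Gm_def)
  have L: "four_block_mat (1\<^sub>m (k+2)) (0\<^sub>m (k+2) ((k+1) + NN k)) (0\<^sub>m ((k+1) + NN k) (k+2)) (Cexp k) $$ (i,j) =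
     (if i < k+2 then (if j < k+2 then (if i = j then 1 else 0) else 0) else if j < k+2 then 0 else Cexp k $$ (i - (k+2), j - (k+2)))"
    using ij by (simp add: Cexp_def)
  have R: "Cexp k $$ (i - (k+2), j - (k+2)) = (if i - (k+2) < k+1 then 0 else if i - (k+2) < 2*k+1 then
     (if j - (k+2) = 0 then 1 else if j - (k+2) = i - (k+2) - k then -1 else if j - (k+2) = i - (k+2) then int (k+2) else 0)
     else if j - (k+2) = i - (k+2) then int (k+2) else 0)" if "\<not> i < k+2" "\<not> j < k+2"
    using ij that by (simp add: Cexp_def)
  have G: "Gm k $$ (i,j) = (if i < k+2 then (if i = j then 1 else 0) else if i < 2*k+3 then 0
     else if i < 3*k+3 then (if j = k+2 then 1 else if j = i - k then -1 else if j = i then int (k+2) else 0)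
     else if j = i then int (k+2) else 0)" using ij by (simp add: Gm_def)
  show "four_block_mat (1\<^sub>m (k+2)) (0\<^sub>m (k+2) ((k+1) + NN k)) (0\<^sub>m ((k+1) + NN k) (k+2)) (Cexp k) $$ (i,j) = Gm k $$ (i,j)"
  proof (cases "i < k+2")
    case True then show ?thesis unfolding L G by simp
  next
    case ni: False
    show ?thesis
    proof (cases "j < k+2")
      case True
      have "\<not> i < 2*k+3 \<Longrightarrow> j \<noteq> i - k" "j \<noteq> i" "j \<noteq> k+2" using True ni by auto
      then show ?thesis unfolding L G using True ni by simp
    next
      case nj: False
      show ?thesis
      proof (cases "i < 2*k+3")
        case True then show ?thesis unfolding L G R[OF ni nj] using ni nj by simp
      next
        case f2: False
        have e1: "(j - (k+2) = i - (k+2)) = (j = i)" using ni nj by auto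
        show ?thesis
        proof (cases "i < 3*k+3")
          case True
          have e2: "(j - (k+2) = 0) = (j = k+2)" using nj by auto
          have e3: "(j - (k+2) = i - (k+2) - k) = (j = i - k)" using nj f2 by auto
          have "i - (k+2) < 2*k+1" "\<not> i - (k+2) < k+1" using True f2 by auto
          then show ?thesis unfolding L G R[OF ni nj] using True f2 ni nj by (simp only: e1 e2 e3 if_True if_False)
        next
          case False
          have "\<not> i - (k+2) < 2*k+1" "\<not> i - (k+2) < k+1" using False f2 by auto
          then show ?thesis unfolding L G R[OF ni nj] using False f2 ni nj by (simp only: e1 if_True if_False)
        qed
      qed
    qed
  qed
qed

lemma GQa: "Gm k * Qa k = G1 k"
proof (rule eq_matI)
  fix i j assume "i < dim_row (G1 k)" "j < dim_col (G1 k)"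
  then have ij: "i < SS k" "j < SS k" by (auto simp: G1_def)
  note G = Gm_carrier[of k] and Q = Qa_carrier[of k]
  show "(Gm k * Qa k) $$ (i,j) = G1 k $$ (i,j)"
  proof (cases "i < k+2")
    case True
    have "(Gm k * Qa k) $$ (i,j) = 1 * Qa k $$ (i,j) + 0 * Qa k $$ (i,j) + 0 * Qa k $$ (i,j)"
      by (rule mult_row3[OF G Q ij ij(1) ij(1) ij(1)], insert True ij, auto simp: Gm_def)
    then show ?thesis using True ij by (simp add: Qa_def G1_def)
  next
    case f1: False
    show ?thesis
    proof (cases "i < 2*k+3")
      case True
      have "(Gm k * Qa k) $$ (i,j) = 0"
        by (rule mult_row0[OF G Q ij], insert True f1 ij, auto simp: Gm_def)
      then show ?thesis using True f1 ij by (simp add: G1_def)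
    next
      case f2: False
      show ?thesis
      proof (cases "i < 3*k+3")
        case True
        have a: "k+2 < SS k" "i - k < SS k" using ij by auto
        have "(Gm k * Qa k) $$ (i,j) = 1 * Qa k $$ (k+2,j) + (-1) * Qa k $$ (i-k,j) + int (k+2) * Qa k $$ (i,j)"
          by (rule mult_row3[OF G Q ij a ij(1)], insert True f1 f2 ij, auto simp: Gm_def)
        then show ?thesis using True f1 f2 ij by (auto simp: Qa_def G1_def)
      next
        case f3: False
        have "(Gm k * Qa k) $$ (i,j) = int (k+2) * Qa k $$ (i,j) + 0 * Qa k $$ (i,j) + 0 * Qa k $$ (i,j)"
          by (rule mult_row3[OF G Q ij ij(1) ij(1) ij(1)], insert f3 f1 f2 ij, auto simp: Gm_def)
        then show ?thesis using f3 f1 f2 ij by (simp add: Qa_def G1_def)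
      qed
    qed
  qed
qed (auto simp: G1_def Qa_def Gm_def)

lemma G1Qb: "G1 k * Qb k = G2 k"
proof (rule eq_matI)
  fix i j assume "i < dim_row (G2 k)" "j < dim_col (G2 k)"
  then have ij: "i < SS k" "j < SS k" by (auto simp: G2_def)
  note G = G1_carrier[of k] and Q = Qb_carrier[of k]
  show "(G1 k * Qb k) $$ (i,j) = G2 k $$ (i,j)"
  proof (cases "i < k+2")
    case True
    have "(G1 k * Qb k) $$ (i,j) = 1 * Qb k $$ (i,j) + 0 * Qb k $$ (i,j) + 0 * Qb k $$ (i,j)"
      by (rule mult_row3[OF G Q ij ij(1) ij(1) ij(1)], insert True ij, auto simp: G1_def)
    then show ?thesis using True ij by (simp add: Qb_def G2_def)
  next
    case f1: False
    show ?thesis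
    proof (cases "i < 2*k+3")
      case True
      have "(G1 k * Qb k) $$ (i,j) = 0"
        by (rule mult_row0[OF G Q ij], insert True f1 ij, auto simp: G1_def)
      then show ?thesis using True f1 ij by (simp add: G2_def)
    next
      case f2: False
      show ?thesis
      proof (cases "i < 3*k+3")
        case True
        have a: "i - k < SS k" using ij by auto
        have "(G1 k * Qb k) $$ (i,j) = (-1) * Qb k $$ (i-k,j) + int (k+2) * Qb k $$ (i,j) + 0 * Qb k $$ (i,j)"
          by (rule mult_row3[OF G Q ij a ij(1) ij(1)], insert True f1 f2 ij, auto simp: G1_def)
        then show ?thesis using True f1 f2 ij by (auto simp: Qb_def G2_def)
      next
        case f3: False
        have "(G1 k * Qb k) $$ (i,j) = int (k+2) * Qb k $$ (i,j) + 0 * Qb k $$ (i,j) + 0 * Qb k $$ (i,j)"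
          by (rule mult_row3[OF G Q ij ij(1) ij(1) ij(1)], insert f3 f1 f2 ij, auto simp: G1_def)
        then show ?thesis using f3 f1 f2 ij by (simp add: Qb_def G2_def)
      qed
    qed
  qed
qed (auto simp: G2_def Qb_def G1_def)

lemma prod_list_ones: "(\<And>x. x \<in> set xs \<Longrightarrow> f x = (1::int)) \<Longrightarrow> prod_list (map f xs) = 1"
  by (induct xs) auto

lemma Qa_inv: "invertible_mat (Qa k)"
proof (rule invertible_det[OF Qa_carrier])
  have "det (Qa k) = prod_list (diag_mat (Qa k))"
    by (rule det_lower_triangular[OF _ Qa_carrier], auto simp: Qa_def)
  also have "\<dots> = 1" unfolding diag_mat_def by (rule prod_list_ones) (auto simp: Qa_def)
  finally show "det (Qa k) = 1 \<or> det (Qa k) = -1" by simp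
qed

lemma Qb_inv: "invertible_mat (Qb k)"
proof (rule invertible_det[OF Qb_carrier])
  have "det (Qb k) = prod_list (diag_mat (Qb k))"
    by (rule det_upper_triangular[OF _ Qb_carrier], auto simp: Qb_def upper_triangular_def)
  also have "\<dots> = 1" unfolding diag_mat_def by (rule prod_list_ones) (auto simp: Qb_def)
  finally show "det (Qb k) = 1 \<or> det (Qb k) = -1" by simp
qed



definition sig :: "nat \<Rightarrow> nat \<Rightarrow> nat" where
  "sig k t = (if t < k+2 then t else if t < k+2+NN k then t + (k+1) else t - NN k)"
definition tau :: "nat \<Rightarrow> nat \<Rightarrow> nat" where
  "tau k i = (if i < k+2 then i else if i < 2*k+3 then i + NN k else i - (k+1))"
definition sg :: "nat \<Rightarrow> nat \<Rightarrow> int" where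
  "sg k t = (if k+2 \<le> t \<and> t < 2*k+2 then -1 else 1)"
definition pii :: "nat \<Rightarrow> nat \<Rightarrow> nat" where
  "pii k u = (if u < k+2 then u else if u < 2*k+2 then u+1 else if u < k+2+NN k then u + (k+1)
     else if u = k+2+NN k then k+2 else u - NN k + k)"
definition rho :: "nat \<Rightarrow> nat \<Rightarrow> nat" where
  "rho k j = (if j < k+2 then j else if j = k+2 then k+2+NN k else if j < 2*k+3 then j - 1
     else if j < 3*k+3 then j + NN k - k else j - (k+1))"

lemma sig_lt: "t < SS k \<Longrightarrow> sig k t < SS k" unfolding sig_def by auto
lemma tau_lt: "i < SS k \<Longrightarrow> tau k i < SS k" unfolding tau_def by auto
lemma sig_tau: "i < SS k \<Longrightarrow> sig k (tau k i) = i" unfolding sig_def tau_def by auto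
lemma tau_sig: "t < SS k \<Longrightarrow> tau k (sig k t) = t" unfolding sig_def tau_def by auto
lemma pii_lt: "u < SS k \<Longrightarrow> pii k u < SS k" using NN_ge[of k] unfolding pii_def by auto
lemma rho_lt: "j < SS k \<Longrightarrow> rho k j < SS k" using NN_ge[of k] unfolding rho_def by auto
lemma pii_rho: "j < SS k \<Longrightarrow> pii k (rho k j) = j" using NN_ge[of k] unfolding pii_def rho_def by auto
lemma rho_pii: "u < SS k \<Longrightarrow> rho k (pii k u) = u" using NN_ge[of k] unfolding pii_def rho_def by auto

lemma pii_eq: "u < SS k \<Longrightarrow> (pii k u = v) = (u = rho k v)" if "v < SS k"
  using pii_rho[OF that] rho_pii by metis

lemma sig_eq: "t < SS k \<Longrightarrow> (i = sig k t) = (t = tau k i)" if "i < SS k"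
  using sig_tau[OF that] tau_sig by metis

lemma sg_sq: "sg k t * sg k t = 1" unfolding sg_def by simp

definition Pm :: "nat \<Rightarrow> int mat" where
  "Pm k = mat (SS k) (SS k) (\<lambda>(t,l). if l = sig k t then sg k t else 0)"
definition Qp :: "nat \<Rightarrow> int mat" where
  "Qp k = mat (SS k) (SS k) (\<lambda>(l,u). if l = pii k u then 1 else 0)"

lemma Pm_carrier: "Pm k \<in> carrier_mat (SS k) (SS k)" unfolding Pm_def by simp
lemma Qp_carrier: "Qp k \<in> carrier_mat (SS k) (SS k)" unfolding Qp_def by simp

lemma Pm_inv: "invertible_mat (Pm k)"
proof (rule invertible_I[OF Pm_carrier, of "transpose_mat (Pm k)"])
  note P = Pm_carrier[of k]
  have PT: "transpose_mat (Pm k) \<in> carrier_mat (SS k) (SS k)" using P by simp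
  show "transpose_mat (Pm k) \<in> carrier_mat (SS k) (SS k)" by (rule PT)
  show "Pm k * transpose_mat (Pm k) = 1\<^sub>m (SS k)"
  proof (rule eq_matI)
    fix t u assume "t < dim_row (1\<^sub>m (SS k) :: int mat)" "u < dim_col (1\<^sub>m (SS k) :: int mat)"
    then have tu: "t < SS k" "u < SS k" by auto
    have s: "sig k t < SS k" using sig_lt[OF tu(1)] .
    have "(Pm k * transpose_mat (Pm k)) $$ (t,u) = sg k t * transpose_mat (Pm k) $$ (sig k t, u) + 0 * transpose_mat (Pm k) $$ (sig k t, u) + 0 * transpose_mat (Pm k) $$ (sig k t, u)"
      by (rule mult_row3[OF P PT tu s s s], insert tu, simp add: Pm_def)
    also have "\<dots> = sg k t * (if sig k t = sig k u then sg k u else 0)" using tu s by (simp add: Pm_def)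
    also have "\<dots> = (if t = u then 1 else 0)"
    proof -
      have "(sig k t = sig k u) = (t = u)" using tau_sig[OF tu(1)] tau_sig[OF tu(2)] by metis
      then show ?thesis by (cases "t = u") (simp_all add: sg_sq)
    qed
    finally show "(Pm k * transpose_mat (Pm k)) $$ (t,u) = 1\<^sub>m (SS k) $$ (t,u)" using tu by simp
  qed (use P in auto)
  show "transpose_mat (Pm k) * Pm k = 1\<^sub>m (SS k)"
  proof (rule eq_matI)
    fix i j assume "i < dim_row (1\<^sub>m (SS k) :: int mat)" "j < dim_col (1\<^sub>m (SS k) :: int mat)"
    then have ij: "i < SS k" "j < SS k" by auto
    have s: "tau k i < SS k" using tau_lt[OF ij(1)] .
    have "(transpose_mat (Pm k) * Pm k) $$ (i,j) = sg k (tau k i) * Pm k $$ (tau k i, j) + 0 * Pm k $$ (tau k i, j) + 0 * Pm k $$ (tau k i, j)"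
    proof (rule mult_row3[OF PT P ij s s s])
      fix l assume l: "l < SS k"
      have e: "transpose_mat (Pm k) $$ (i, l) = (if i = sig k l then sg k l else 0)" using l ij by (simp add: Pm_def)
      show "transpose_mat (Pm k) $$ (i, l) = (if l = tau k i then sg k (tau k i) else 0) + (if l = tau k i then 0 else 0) + (if l = tau k i then 0 else 0)"
      proof (cases "l = tau k i")
        case True
        then have "i = sig k l" using sig_tau[OF ij(1)] by simp
        then show ?thesis unfolding e using True by simp
      next
        case False
        then have "i \<noteq> sig k l" using tau_sig[OF l] by metis
        then show ?thesis unfolding e using False by simp
      qed
    qed
    also have "\<dots> = sg k (tau k i) * (if j = sig k (tau k i) then sg k (tau k i) else 0)" using s ij by (simp add: Pm_def)
    also have "\<dots> = (if i = j then 1 else 0)" unfolding sig_tau[OF ij(1)] by (cases "i = j") (simp_all add: sg_sq)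
    finally show "(transpose_mat (Pm k) * Pm k) $$ (i,j) = 1\<^sub>m (SS k) $$ (i,j)" using ij by simp
  qed (use P in auto)
qed

lemma Qp_inv: "invertible_mat (Qp k)"
proof (rule invertible_I[OF Qp_carrier, of "transpose_mat (Qp k)"])
  note P = Qp_carrier[of k]
  have PT: "transpose_mat (Qp k) \<in> carrier_mat (SS k) (SS k)" using P by simp
  show "transpose_mat (Qp k) \<in> carrier_mat (SS k) (SS k)" by (rule PT)
  show "Qp k * transpose_mat (Qp k) = 1\<^sub>m (SS k)"
  proof (rule eq_matI)
    fix t u assume "t < dim_row (1\<^sub>m (SS k) :: int mat)" "u < dim_col (1\<^sub>m (SS k) :: int mat)"
    then have tu: "t < SS k" "u < SS k" by auto
    have s: "rho k t < SS k" using rho_lt[OF tu(1)] .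
    have "(Qp k * transpose_mat (Qp k)) $$ (t,u) = 1 * transpose_mat (Qp k) $$ (rho k t, u) + 0 * transpose_mat (Qp k) $$ (rho k t, u) + 0 * transpose_mat (Qp k) $$ (rho k t, u)"
    proof (rule mult_row3[OF P PT tu s s s])
      fix l assume l: "l < SS k"
      have e: "Qp k $$ (t, l) = (if t = pii k l then 1 else 0)" using l tu by (simp add: Qp_def)
      show "Qp k $$ (t, l) = (if l = rho k t then 1 else 0) + (if l = rho k t then 0 else 0) + (if l = rho k t then 0 else 0)"
      proof (cases "l = rho k t")
        case True
        then have "t = pii k l" using pii_rho[OF tu(1)] by simp
        then show ?thesis unfolding e using True by simp
      next
        case False
        then have "t \<noteq> pii k l" using rho_pii[OF l] by metis
        then show ?thesis unfolding e using False by simp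
      qed
    qed
    also have "\<dots> = (if u = pii k (rho k t) then 1 else 0)" using s tu by (simp add: Qp_def)
    also have "\<dots> = (if t = u then 1 else 0)" unfolding pii_rho[OF tu(1)] by auto
    finally show "(Qp k * transpose_mat (Qp k)) $$ (t,u) = 1\<^sub>m (SS k) $$ (t,u)" using tu by simp
  qed (use P in auto)
  show "transpose_mat (Qp k) * Qp k = 1\<^sub>m (SS k)"
  proof (rule eq_matI)
    fix i j assume "i < dim_row (1\<^sub>m (SS k) :: int mat)" "j < dim_col (1\<^sub>m (SS k) :: int mat)"
    then have ij: "i < SS k" "j < SS k" by auto
    have s: "pii k i < SS k" using pii_lt[OF ij(1)] .
    have "(transpose_mat (Qp k) * Qp k) $$ (i,j) = 1 * Qp k $$ (pii k i, j) + 0 * Qp k $$ (pii k i, j) + 0 * Qp k $$ (pii k i, j)"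
      by (rule mult_row3[OF PT P ij s s s], insert ij, simp add: Qp_def)
    also have "\<dots> = (if pii k i = pii k j then 1 else 0)" using s ij by (simp add: Qp_def)
    also have "\<dots> = (if i = j then 1 else 0)"
    proof -
      have "(pii k i = pii k j) = (i = j)" using rho_pii[OF ij(1)] rho_pii[OF ij(2)] by metis
      then show ?thesis by simp
    qed
    finally show "(transpose_mat (Qp k) * Qp k) $$ (i,j) = 1\<^sub>m (SS k) $$ (i,j)" using ij by simp
  qed (use P in auto)
qed



lemma NN_alt: "2*k+2 + (k+2-2)*(k+2-3) div 2 = k+2 + NN k"
proof (cases k)
  case 0 then show ?thesis by simp
next
  case (Suc j)
  have "(k+2-2)*(k+2-3) div 2 = NN j" using Suc by (simp add: algebra_simps)
  moreover have "NN k = (j+1) + NN j" using Suc NN_Suc by simp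
  ultimately show ?thesis using Suc by simp
qed

lemma snf_dims: "k+2 + (k+2)*(k+2-1) div 2 = SS k"
  using tri_suc[of k] by simp

lemma final_eq: "Pm k * G2 k * Qp k = snf_target (k+2)"
proof (rule eq_matI)
  show "dim_row (Pm k * G2 k * Qp k) = dim_row (snf_target (k+2))"
    "dim_col (Pm k * G2 k * Qp k) = dim_col (snf_target (k+2))"
    unfolding snf_target_def snf_dims using Pm_carrier[of k] Qp_carrier[of k] by auto
  fix t u assume "t < dim_row (snf_target (k+2))" "u < dim_col (snf_target (k+2))"
  then have tu: "t < SS k" "u < SS k" unfolding snf_target_def snf_dims by auto
  have PG: "Pm k * G2 k \<in> carrier_mat (SS k) (SS k)" using Pm_carrier[of k] G2_carrier[of k] by simp
  have pu: "pii k u < SS k" by (rule pii_lt[OF tu(2)])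
  have st: "sig k t < SS k" by (rule sig_lt[OF tu(1)])
  have "(Pm k * G2 k * Qp k) $$ (t,u) = (Pm k * G2 k) $$ (t, pii k u) * 1"
    by (rule mult_col1[OF PG Qp_carrier tu pu], insert tu, simp add: Qp_def)
  also have "(Pm k * G2 k) $$ (t, pii k u) = sg k t * G2 k $$ (sig k t, pii k u) + 0 * G2 k $$ (sig k t, pii k u) + 0 * G2 k $$ (sig k t, pii k u)"
    by (rule mult_row3[OF Pm_carrier G2_carrier tu(1) pu st st st], insert tu, simp add: Pm_def)
  finally have L: "(Pm k * G2 k * Qp k) $$ (t,u) = sg k t * G2 k $$ (sig k t, pii k u)" by simp
  have T: "snf_target (k+2) $$ (t,u) = (if t = u then (if t < 2*k+2 then 1 else if t < k+2 + NN k then int (k+2) else 0) else 0)"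
  proof -
    have "snf_target (k+2) $$ (t,u) = (if t = u then (if t < 2*(k+2)-2 then 1 else if t < 2*(k+2)-2 + (k+2-2)*(k+2-3) div 2 then int (k+2) else 0) else 0)"
      using tu unfolding snf_target_def snf_dims by simp
    also have "2*(k+2)-2 = 2*k+2" by simp
    also have "2*k+2 + (k+2-2)*(k+2-3) div 2 = k+2 + NN k" by (rule NN_alt)
    finally show ?thesis .
  qed
  have pe: "(pii k u = v) = (u = rho k v)" if "v < SS k" for v using pii_eq[OF that tu(2)] .
  have K: "k \<le> NN k" by (rule NN_ge)
  show "(Pm k * G2 k * Qp k) $$ (t,u) = snf_target (k+2) $$ (t,u)"
    unfolding L T
  proof -
    consider (a) "t < k+2" | (b) "k+2 \<le> t" "t < 2*k+2" | (c) "2*k+2 \<le> t" "t < k+2+NN k" | (d) "k+2+NN k \<le> t" by linarith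
    then show "sg k t * G2 k $$ (sig k t, pii k u) = (if t = u then (if t < 2*k+2 then 1 else if t < k+2 + NN k then int (k+2) else 0) else 0)"
    proof cases
      case a
      have s: "sig k t = t" "sg k t = 1" using a unfolding sig_def sg_def by auto
      have "G2 k $$ (t, pii k u) = (if t = pii k u then 1 else 0)" using a tu pu by (simp add: G2_def)
      also have "(t = pii k u) = (u = t)" using pe[OF tu(1)] a by (auto simp: rho_def)
      finally show ?thesis unfolding s using a by auto
    next
      case b
      have s: "sig k t = t + (k+1)" "sg k t = -1" using b K unfolding sig_def sg_def by auto
      have v: "t + 1 < SS k" using b K by simp
      have "G2 k $$ (t + (k+1), pii k u) = (if pii k u = t + (k+1) - k then -1 else 0)"
        using b tu pu st s by (simp add: G2_def)
      also have "(pii k u = t + (k+1) - k) = (u = t)" using pe[OF v] b by (simp add: rho_def)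
      finally show ?thesis unfolding s using b by auto
    next
      case c
      have s: "sig k t = t + (k+1)" "sg k t = 1" using c K unfolding sig_def sg_def by auto
      have v: "t + (k+1) < SS k" using c by simp
      have "G2 k $$ (t + (k+1), pii k u) = (if pii k u = t + (k+1) then int (k+2) else 0)"
        using c tu pu st s by (simp add: G2_def)
      also have "(pii k u = t + (k+1)) = (u = t)" using pe[OF v] c by (simp add: rho_def)
      finally show ?thesis unfolding s using c by auto
    next
      case d
      have s: "sig k t = t - NN k" using d unfolding sig_def by auto
      have i: "t - NN k < SS k" "\<not> t - NN k < k+2" "t - NN k < 2*k+3" using d tu by linarith+
      have "G2 k $$ (t - NN k, pii k u) = 0" unfolding G2_def using i pu by simp
      moreover have "\<not> t < 2*k+2" "\<not> t < k+2 + NN k" using d K by auto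
      ultimately show ?thesis unfolding s by simp
    qed
  qed
qed


lemma Ck_carrier: "Ck k \<in> carrier_mat ((k+1) + NN k) ((k+1) + NN k)"
  unfolding Ck_def by (rule four_block_carrier_mat) simp_all

lemma eqv_main: "eqv (A_mat (k+2)) (snf_target (k+2))"
proof -
  let ?N = "(k+1) + NN k"
  have e3: "eqv (four_block_mat (1\<^sub>m (k+2)) (0\<^sub>m (k+2) ?N) (0\<^sub>m ?N (k+2)) (Bk k))
     (four_block_mat (1\<^sub>m (k+2)) (0\<^sub>m (k+2) ?N) (0\<^sub>m ?N (k+2)) (Ck k))"
    by (rule eqv_diag[OF eqv_refl step3 one_carrier_mat Bk_carrier])
  have e4: "eqv (four_block_mat (1\<^sub>m (k+2)) (0\<^sub>m (k+2) ?N) (0\<^sub>m ?N (k+2)) (Ck k))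
     (four_block_mat (1\<^sub>m (k+2)) (0\<^sub>m (k+2) ?N) (0\<^sub>m ?N (k+2)) (Cexp k))"
    by (rule eqv_diag[OF eqv_refl step4 one_carrier_mat Ck_carrier])
  have e5: "eqv (Gm k) (G1 k)"
    by (rule eqv_I[OF Gm_carrier one_carrier_mat Qa_carrier invertible_one Qa_inv], simp only: left_mult_one_mat[OF Gm_carrier] GQa)
  have e6: "eqv (G1 k) (G2 k)"
    by (rule eqv_I[OF G1_carrier one_carrier_mat Qb_carrier invertible_one Qb_inv], simp only: left_mult_one_mat[OF G1_carrier] G1Qb)
  have e7: "eqv (G2 k) (snf_target (k+2))"
    by (rule eqv_I[OF G2_carrier Pm_carrier Qp_carrier Pm_inv Qp_inv final_eq])
  show ?thesis
    using eqv_trans[OF eqv_trans[OF eqv_trans[OF eqv_trans[OF step1 step2] e3] e4[unfolded Gm_eq]] eqv_trans[OF e5 eqv_trans[OF e6 e7]]] .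
qed

lemma snf_smith: "in_smith_form (snf_target n)"
  unfolding in_smith_form_def snf_target_def by auto

theorem theorem4p4:
  fixes n :: nat
  assumes "n \<ge> 2"
  shows "is_smith_normal_form_of (A_mat n) (snf_target n)"
proof -
  obtain k where n: "n = k+2" using assms by (metis add.commute le_Suc_ex)
  have e: "eqv (A_mat n) (snf_target n)" unfolding n by (rule eqv_main)
  show ?thesis unfolding is_smith_normal_form_of_def
    using e eqv_dims[OF e] snf_smith[of n] unfolding eqv_def by auto
qed


end
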